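(* Let $d=1$ and let $(X_1,M_1),\dots,(X_n,M_n)$ be i.i.d. copies of $(X,M)\sim\mathbb{P}_{X,M}$, $X\in\mathbb{R}$, $M\in\{0,1\}$ ($M=0$: $X$ observed), with arbitrary missingness mechanism $\pi(x)=\mathbb{P}[M=0\mid X=x]$. Assume $\mathbb{P}_X=(1-\epsilon)P_{\theta^*}+\epsilon\mathbb{Q}_X$ for some $\theta^*\in\Theta$, some distribution $\mathbb{Q}_X$ on $\mathbb{R}$ and $\epsilon\in[0,1)$, and let $\pi^*=\mathbb{E}_{X\sim P_{\theta^*}}[\pi(X)]>0$. Let $\theta_n^{\mathrm{MMD}}$ be a minimizer over $\Theta$ of $\theta\mapsto\frac1n\sum_{i:M_i=0}\mathbb{D}^2(P_\theta,\delta_{\{X_i\}})$ (equivalently of $\mathbb{D}(P_\theta,P_n)$, $P_n$ the empirical measure of the observed $X_i$). Then $$ \mathbb{E}_{\mathcal{S}}\big[\mathbb{D}(P_{\theta_n^{\mathrm{MMD}}},P_{\theta^*})\big]\le 4\epsilon+\frac{8\epsilon}{\pi^*(1-\epsilon)}+\frac{2\sqrt{\mathbb{V}_{X\sim P_{\theta^*}}[\pi(X)]}}{\pi^*}+\frac{2\sqrt2}{\sqrt{n\pi^*(1-\epsilon)}}, $$ where $\mathbb{E}_{\mathcal{S}}$ is the expectation over the sample $\{(X_i,M_i)\}_{1\le i\le n}$.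
   Context: $\{P_\theta:\theta\in\Theta\}$ is a model on $\mathbb{R}$. $k$ is a positive definite kernel on $\mathbb{R}$ bounded by $1$ and characteristic, with RKHS $\mathcal{H}$, mean embedding $\Phi(Q)=\mathbb{E}_{Y\sim Q}[k(Y,\cdot)]$ and MMD $\mathbb{D}(Q_1,Q_2)=\|\Phi(Q_1)-\Phi(Q_2)\|_{\mathcal{H}}$. *)

theory Defs
  imports "HOL-Probability.Probability"
begin

definition pd_kernel :: "(real \<Rightarrow> real \<Rightarrow> real) \<Rightarrow> bool" where
  "pd_kernel k \<longleftrightarrow> (\<forall>x y. k x y = k y x) \<and>
     (\<forall>(n::nat) (c::nat \<Rightarrow> real) (x::nat \<Rightarrow> real).
        (\<Sum>i<n. \<Sum>j<n. c i * c j * k (x i) (x j)) \<ge> 0)"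

text \<open>Squared MMD written out: the squared RKHS norm of the difference of mean embeddings
  \<open>\<parallel>\<Phi>(Q1) - \<Phi>(Q2)\<parallel>^2\<close>, unfolded via the reproducing property.\<close>
definition mmd_sq :: "(real \<Rightarrow> real \<Rightarrow> real) \<Rightarrow> real measure \<Rightarrow> real measure \<Rightarrow> real" where
  "mmd_sq k Q1 Q2 =
     (\<integral>x. \<integral>y. k x y \<partial>Q1 \<partial>Q1) - 2 * (\<integral>x. \<integral>y. k x y \<partial>Q2 \<partial>Q1)
     + (\<integral>x. \<integral>y. k x y \<partial>Q2 \<partial>Q2)"

definition mmd :: "(real \<Rightarrow> real \<Rightarrow> real) \<Rightarrow> real measure \<Rightarrow> real measure \<Rightarrow> real" where
  "mmd k Q1 Q2 = sqrt (mmd_sq k Q1 Q2)"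

definition characteristic :: "(real \<Rightarrow> real \<Rightarrow> real) \<Rightarrow> bool" where
  "characteristic k \<longleftrightarrow> (\<forall>Q1 Q2. prob_space Q1 \<and> sets Q1 = sets borel \<and>
      prob_space Q2 \<and> sets Q2 = sets borel \<and> mmd k Q1 Q2 = 0 \<longrightarrow> Q1 = Q2)"

text \<open>MMD objective. A sample is \<open>s :: nat \<Rightarrow> real \<times> bool\<close>; the flag \<open>snd (s i) = True\<close>
  encodes \<open>M_i = 0\<close> (X_i observed).\<close>
definition mmd_objective ::
  "(real \<Rightarrow> real \<Rightarrow> real) \<Rightarrow> ('a \<Rightarrow> real measure) \<Rightarrow> nat \<Rightarrow> (nat \<Rightarrow> real \<times> bool) \<Rightarrow> 'a \<Rightarrow> real" where
  "mmd_objective k P n s \<theta> =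
     (1 / real n) * (\<Sum>i\<in>{i. i < n \<and> snd (s i)}. (mmd k (P \<theta>) (return borel (fst (s i))))\<^sup>2)"

end

theory Submission
  imports Defs
begin


lemma integrate_out:
  fixes M :: "'i \<Rightarrow> 'a measure" and F :: "('i \<Rightarrow> 'a) \<Rightarrow> real"
  assumes P: "\<And>i. prob_space (M i)" and I: "finite I" "a \<in> I"
    and F[measurable]: "F \<in> borel_measurable (PiM I M)"
    and B: "\<And>s. s \<in> space (PiM I M) \<Longrightarrow> \<bar>F s\<bar> \<le> B"
  shows "(\<integral>s. F s \<partial>PiM I M) = (\<integral>s. (\<integral>y. F (s(a:=y)) \<partial>M a) \<partial>PiM I M)"
proof -
  interpret product_prob_space M I
    by (simp add: product_prob_space_def product_sigma_finite_def product_prob_space_axioms_def P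
        prob_space_imp_sigma_finite)
  define J where "J = I - {a}"
  have IJ: "I = insert a J" "a \<notin> J" "finite J" using I by (auto simp: J_def)
  have upd[measurable]: "(\<lambda>(s,y). s(a:=y)) \<in> measurable (PiM I M \<Otimes>\<^sub>M M a) (PiM I M)"
    using measurable_fun_upd[where I=I and J=I and i=a and f=fst and h=snd and N="PiM I M \<Otimes>\<^sub>M M a" and M=M]
    using I by (auto simp: case_prod_beta')
  have Fu: "(\<lambda>(s,y). F (s(a:=y))) \<in> borel_measurable (PiM I M \<Otimes>\<^sub>M M a)"
    using measurable_comp[OF upd F] by (simp add: comp_def case_prod_beta')
  define G where "G s = (\<integral>y. F (s(a:=y)) \<partial>M a)" for s
  have G[measurable]: "G \<in> borel_measurable (PiM I M)"
    unfolding G_def using Fu by (intro M.borel_measurable_lebesgue_integral) simp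
  have updsp: "s(a:=y) \<in> space (PiM I M)" if "s \<in> space (PiM I M)" "y \<in> space (M a)" for s y
    using that I by (auto simp: space_PiM PiE_iff extensional_def)
  have GB: "\<bar>G s\<bar> \<le> B" if "s \<in> space (PiM I M)" for s
  proof -
    have "\<bar>G s\<bar> \<le> (\<integral>y. \<bar>F (s(a:=y))\<bar> \<partial>M a)"
      unfolding G_def by (rule integral_abs_bound)
    also have "\<dots> \<le> (\<integral>y. B \<partial>M a)"
      using that updsp B Fu
      by (intro integral_mono_AE) (auto intro!: M.integrable_const_bound[where B=B] 
          measurable_Pair_compose_split[OF Fu] measurable_const)
    finally show ?thesis by (simp add: M.prob_space)
  qed
  have Fint: "integrable (PiM I M) F"
    using B by (intro P.integrable_const_bound[where B=B]) auto
  have Gint: "integrable (PiM I M) G"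
    using GB by (intro P.integrable_const_bound[where B=B]) auto
  have "(\<integral>s. F s \<partial>PiM I M) = (\<integral>x. (\<integral>y. F (x(a:=y)) \<partial>M a) \<partial>PiM J M)"
    using product_integral_insert[of J a F] Fint IJ by simp
  also have "\<dots> = (\<integral>x. (\<integral>y. G (x(a:=y)) \<partial>M a) \<partial>PiM J M)"
    by (simp add: G_def M.prob_space)
  also have "\<dots> = (\<integral>s. G s \<partial>PiM I M)"
    using product_integral_insert[of J a G] Gint IJ by simp
  finally show ?thesis unfolding G_def .
qed

lemma abs_int_le:
  fixes f :: "'a \<Rightarrow> real"
  assumes "prob_space M" "f \<in> borel_measurable M" "\<And>x. x \<in> space M \<Longrightarrow> \<bar>f x\<bar> \<le> B"
  shows "\<bar>\<integral>x. f x \<partial>M\<bar> \<le> B"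
proof -
  interpret prob_space M by fact
  have "\<bar>\<integral>x. f x \<partial>M\<bar> \<le> (\<integral>x. \<bar>f x\<bar> \<partial>M)" by (rule integral_abs_bound)
  also have "\<dots> \<le> (\<integral>x. B \<partial>M)"
    using assms by (intro integral_mono_AE) (auto intro!: integrable_const_bound[where B=B])
  finally show ?thesis by (simp add: prob_space)
qed

lemma integrable_bnd:
  fixes f :: "'a \<Rightarrow> real"
  assumes "prob_space M" "f \<in> borel_measurable M" "\<And>x. x \<in> space M \<Longrightarrow> \<bar>f x\<bar> \<le> B"
  shows "integrable M f"
proof -
  interpret prob_space M by fact
  show ?thesis using assms by (intro integrable_const_bound[where B=B]) auto
qed

lemma coord1:
  fixes M :: "'i \<Rightarrow> 'a measure" and f :: "'a \<Rightarrow> real"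
  assumes P: "\<And>i. prob_space (M i)" and I: "finite I" "j \<in> I"
    and f[measurable]: "f \<in> borel_measurable (M j)"
    and B: "\<And>x. x \<in> space (M j) \<Longrightarrow> \<bar>f x\<bar> \<le> B"
  shows "(\<integral>s. f (s j) \<partial>PiM I M) = (\<integral>x. f x \<partial>M j)"
proof -
  have "(\<integral>s. f (s j) \<partial>PiM I M) = (\<integral>s. (\<integral>y. f ((s(j:=y)) j) \<partial>M j) \<partial>PiM I M)"
    using I B by (intro integrate_out[OF P I]) (auto simp: space_PiM PiE_iff)
  also have "\<dots> = (\<integral>x. f x \<partial>M j)"
    using prob_space.prob_space[OF prob_space_PiM[of I M]] P by simp
  finally show ?thesis .
qed

lemma coord2:
  fixes M :: "'i \<Rightarrow> 'a measure" and f :: "'a \<Rightarrow> 'a \<Rightarrow> real"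
  assumes P: "\<And>i. prob_space (M i)" and I: "finite I" "j \<in> I" "j' \<in> I" "j \<noteq> j'"
    and f[measurable]: "(\<lambda>(x,y). f x y) \<in> borel_measurable (M j \<Otimes>\<^sub>M M j')"
    and B: "\<And>x y. x \<in> space (M j) \<Longrightarrow> y \<in> space (M j') \<Longrightarrow> \<bar>f x y\<bar> \<le> B"
  shows "(\<integral>s. f (s j) (s j') \<partial>PiM I M) = (\<integral>y. (\<integral>x. f x y \<partial>M j) \<partial>M j')"
proof -
  have m1: "(\<lambda>s. f (s j) (s j')) \<in> borel_measurable (PiM I M)"
    using measurable_comp[OF measurable_Pair[OF measurable_component_singleton[OF I(2)] 
      measurable_component_singleton[OF I(3)]] f] by (simp add: comp_def)
  have "(\<integral>s. f (s j) (s j') \<partial>PiM I M) = (\<integral>s. (\<integral>y. f ((s(j:=y)) j) ((s(j:=y)) j') \<partial>M j) \<partial>PiM I M)"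
    using I B by (intro integrate_out[OF P I(1,2) m1]) (auto simp: space_PiM PiE_iff)
  also have "\<dots> = (\<integral>s. (\<integral>x. f x (s j') \<partial>M j) \<partial>PiM I M)"
    using I by simp
  also have "\<dots> = (\<integral>y. (\<integral>x. f x y \<partial>M j) \<partial>M j')"
  proof (rule coord1[OF P I(1,3), where B=B])
    interpret prob_space "M j" by fact
    have "(\<lambda>(y,x). f x y) \<in> borel_measurable (M j' \<Otimes>\<^sub>M M j)"
      using measurable_comp[OF measurable_pair_swap' f] by (simp add: comp_def case_prod_beta')
    then show "(\<lambda>y. \<integral>x. f x y \<partial>M j) \<in> borel_measurable (M j')"
      by (intro borel_measurable_lebesgue_integral) simp
    fix y assume "y \<in> space (M j')"
    then show "\<bar>\<integral>x. f x y \<partial>M j\<bar> \<le> B"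
      using B by (intro abs_int_le[OF prob_space_axioms]) (auto intro: measurable_Pair_compose_split[OF f])
  qed
  finally show ?thesis .
qed

lemma sq_int_le:
  fixes f :: "'a \<Rightarrow> real"
  assumes P: "prob_space M" and f[measurable]: "f \<in> borel_measurable M"
    and B: "\<And>x. x \<in> space M \<Longrightarrow> \<bar>f x\<bar> \<le> B"
  shows "(\<integral>x. f x \<partial>M)\<^sup>2 \<le> (\<integral>x. (f x)\<^sup>2 \<partial>M)"
proof -
  interpret prob_space M by fact
  have i1: "integrable M f" using B by (intro integrable_bnd[OF P f]) 
  have i2: "integrable M (\<lambda>x. (f x)\<^sup>2)"
  proof (rule integrable_bnd[OF P, where B="B\<^sup>2"])
    fix x assume "x \<in> space M"
    then have "\<bar>f x\<bar> \<le> B" by (rule B)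
    then have "\<bar>f x\<bar>\<^sup>2 \<le> B\<^sup>2" by (intro power_mono) auto
    then show "\<bar>(f x)\<^sup>2\<bar> \<le> B\<^sup>2" by simp
  qed simp
  have "0 \<le> variance f" by (intro integral_nonneg_AE) auto
  also have "\<dots> = (\<integral>x. (f x)\<^sup>2 \<partial>M) - (\<integral>x. f x \<partial>M)\<^sup>2" by (rule variance_eq[OF i1 i2])
  finally show ?thesis by simp
qed

definition KK :: "(real \<Rightarrow> real \<Rightarrow> real) \<Rightarrow> real measure \<Rightarrow> real measure \<Rightarrow> real" where
  "KK k A B = (\<integral>x. \<integral>y. k x y \<partial>B \<partial>A)"

definition pb :: "real measure \<Rightarrow> bool" where
  "pb A \<longleftrightarrow> prob_space A \<and> sets A = sets borel"

lemma pb_space: "pb A \<Longrightarrow> space A = UNIV"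
  unfolding pb_def by (metis sets_eq_imp_space_eq space_borel)

lemma pb_meas: "pb A \<Longrightarrow> borel_measurable A = borel_measurable borel"
  unfolding pb_def by (intro measurable_cong_sets) auto

lemma pb_return: "pb (return borel x)"
  unfolding pb_def by (simp add: prob_space_return)

locale kern =
  fixes k :: "real \<Rightarrow> real \<Rightarrow> real"
  assumes sym: "\<And>x y. k x y = k y x"
    and fin: "\<And>(n::nat) (c::nat \<Rightarrow> real) (x::nat \<Rightarrow> real). (\<Sum>i<n. \<Sum>j<n. c i * c j * k (x i) (x j)) \<ge> 0"
    and bnd: "\<And>x y. \<bar>k x y\<bar> \<le> 1"
    and km: "(\<lambda>(x, y). k x y) \<in> borel_measurable borel"
begin

lemma km2[measurable]: "(\<lambda>(x, y). k x y) \<in> borel_measurable (borel \<Otimes>\<^sub>M borel)"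
  using km by (simp add: borel_prod)

lemma km_pair: "pb A \<Longrightarrow> pb B \<Longrightarrow> (\<lambda>(x, y). k x y) \<in> borel_measurable (A \<Otimes>\<^sub>M B)"
  using km2 unfolding pb_def
  by (subst measurable_cong_sets[OF sets_pair_measure_cong refl]) auto

lemma k1[measurable]: "(\<lambda>x. k x y) \<in> borel_measurable borel" "(\<lambda>y. k x y) \<in> borel_measurable borel"
  "(\<lambda>x. k x x) \<in> borel_measurable borel"
  by measurable

lemma inner_meas[measurable]: "pb B \<Longrightarrow> (\<lambda>x. \<integral>y. k x y \<partial>B) \<in> borel_measurable borel"
  unfolding pb_def
  apply (intro sigma_finite_measure.borel_measurable_lebesgue_integral)
   apply (simp add: prob_space_imp_sigma_finite)
  apply (subst measurable_cong_sets[OF sets_pair_measure_cong refl]) 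
  apply auto
  done

lemma inner_bnd: "pb B \<Longrightarrow> \<bar>\<integral>y. k x y \<partial>B\<bar> \<le> 1"
  by (rule abs_int_le) (auto simp: pb_def pb_meas bnd)

lemma KK_bnd: "pb A \<Longrightarrow> pb B \<Longrightarrow> \<bar>KK k A B\<bar> \<le> 1"
  unfolding KK_def by (rule abs_int_le) (auto simp: pb_def pb_meas inner_bnd)

lemma KK_sym: "pb A \<Longrightarrow> pb B \<Longrightarrow> KK k A B = KK k B A"
proof -
  assume A: "pb A" and B: "pb B"
  interpret pair_prob_space A B using A B unfolding pb_def
    by (simp add: pair_prob_space_def pair_sigma_finite_def prob_space_imp_sigma_finite)
  have "integrable (A \<Otimes>\<^sub>M B) (\<lambda>(x, y). k x y)"
    by (rule integrable_bnd[where B=1]) (auto simp: km_pair A B bnd prob_space_axioms)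
  from Fubini_integral[OF this] show ?thesis unfolding KK_def by (simp add: sym)
qed

lemma sum_mod:
  fixes f :: "nat \<Rightarrow> real"
  shows "(\<Sum>j<m*L. f (j mod L)) = real m * (\<Sum>i<L. f i)"
proof -
  have "(\<Sum>j<m*L. f (j mod L)) = (\<Sum>r<m. \<Sum>j\<in>{r*L..<r*L+L}. f (j mod L))"
    by (rule sum.nat_group[symmetric])
  also have "\<dots> = (\<Sum>r<m. \<Sum>i<L. f i)"
  proof (rule sum.cong[OF refl])
    fix r
    have "(\<Sum>j\<in>{r*L..<r*L+L}. f (j mod L)) = (\<Sum>j\<in>{0+r*L..<L+r*L}. f (j mod L))"
      by (simp add: add.commute)
    also have "\<dots> = (\<Sum>i\<in>{0..<L}. f ((i + r*L) mod L))"
      by (rule sum.shift_bounds_nat_ivl)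
    also have "\<dots> = (\<Sum>i<L. f i)"
      by (intro sum.cong) auto
    finally show "(\<Sum>j\<in>{r*L..<r*L+L}. f (j mod L)) = (\<Sum>i<L. f i)" .
  qed
  also have "\<dots> = real m * (\<Sum>i<L. f i)" by simp
  finally show ?thesis .
qed

lemma psd_approx:
  fixes M :: "nat \<Rightarrow> real measure" and c :: "nat \<Rightarrow> real"
  assumes MP: "\<And>i. i < L \<Longrightarrow> pb (M i)" and L: "L > 0" and m: "m > 0"
  shows "0 \<le> (\<Sum>i<L. \<Sum>j<L. c i * c j * KK k (M i) (M j)) + 2 * (\<Sum>i<L. (c i)\<^sup>2) / real m"
proof -
  define M' where "M' j = M (j mod L)" for j
  have pbM': "pb (M' j)" for j unfolding M'_def using MP L by simp
  have P: "prob_space (M' j)" for j using pbM' by (simp add: pb_def)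
  define J where "J = {..<m*L}"
  define w where "w j = c (j mod L) / real m" for j
  define E where "E j j' = (\<integral>s. k (s j) (s j') \<partial>PiM J M')" for j j'
  define KM where "KM j j' = KK k (M' j) (M' j')" for j j'
  define d where "d i = (\<integral>x. k x x \<partial>M i)" for i
  interpret Pi: prob_space "PiM J M'" by (intro prob_space_PiM P)
  have comp: "(\<lambda>s. s j) \<in> measurable (PiM J M') borel" if "j \<in> J" for j
  proof -
    have "sets (M' j) = sets borel" using pbM' by (simp add: pb_def)
    then show "(\<lambda>s. s j) \<in> measurable (PiM J M') borel"
      using measurable_component_singleton[OF \<open>j \<in> J\<close>, of M']
      using measurable_cong_sets[OF refl, of "M' j" borel "PiM J M'"] by simp
  qed
  have kPi: "(\<lambda>s. k (s j) (s j')) \<in> borel_measurable (PiM J M')" if "j \<in> J" "j' \<in> J" for j j'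
  proof -
    have "(\<lambda>s. (s j, s j')) \<in> measurable (PiM J M') (borel \<Otimes>\<^sub>M borel)"
      using that comp by (intro measurable_Pair) auto
    from measurable_comp[OF this km2] show ?thesis by (simp add: comp_def)
  qed
  have kint: "integrable (PiM J M') (\<lambda>s. k (s j) (s j'))" if "j \<in> J" "j' \<in> J" for j j'
    by (rule integrable_bnd[where B=1]) (auto simp: kPi that bnd Pi.prob_space_axioms)
  have Eeq: "E j j' = KM j j' + (if j = j' then d (j mod L) - KM j j else 0)" if "j \<in> J" "j' \<in> J" for j j'
  proof (cases "j = j'")
    case True
    have "E j j' = (\<integral>x. k x x \<partial>M' j)"
      unfolding E_def True using that pbM'[of j'] bnd
      by (intro coord1[OF P]) (auto simp: J_def pb_meas)
    then show ?thesis using True by (simp add: d_def M'_def)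
  next
    case False
    have "E j j' = (\<integral>y. (\<integral>x. k x y \<partial>M' j) \<partial>M' j')"
      unfolding E_def using that False bnd
      by (intro coord2[OF P]) (auto simp: J_def km_pair pbM')
    also have "\<dots> = KK k (M' j') (M' j)" unfolding KK_def by (simp add: sym)
    also have "\<dots> = KM j j'" unfolding KM_def by (rule KK_sym[OF pbM' pbM'])
    finally show ?thesis using False by simp
  qed
  define F where "F s = (\<Sum>j<m*L. \<Sum>j'<m*L. w j * w j' * k (s j) (s j'))" for s
  have "0 \<le> (\<integral>s. F s \<partial>PiM J M')"
    unfolding F_def by (intro integral_nonneg_AE) (auto intro!: fin)
  also have "(\<integral>s. F s \<partial>PiM J M') = (\<Sum>j<m*L. \<Sum>j'<m*L. w j * w j' * E j j')"
  proof -
    have i1: "integrable (PiM J M') (\<lambda>s. w j * w j' * k (s j) (s j'))" if "j < m*L" "j' < m*L" for j j'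
      using kint[of j j'] that by (simp add: J_def)
    have "(\<integral>s. F s \<partial>PiM J M') = (\<Sum>j<m*L. (\<integral>s. (\<Sum>j'<m*L. w j * w j' * k (s j) (s j')) \<partial>PiM J M'))"
      unfolding F_def by (subst Bochner_Integration.integral_sum) (use i1 in \<open>auto intro!: integrable_sum\<close>)
    also have "\<dots> = (\<Sum>j<m*L. \<Sum>j'<m*L. (\<integral>s. w j * w j' * k (s j) (s j') \<partial>PiM J M'))"
      by (rule sum.cong[OF refl], subst Bochner_Integration.integral_sum) (use i1 in auto)
    finally show ?thesis unfolding E_def by simp
  qed
  also have "\<dots> = (\<Sum>j<m*L. \<Sum>j'<m*L. w j * w j' * KM j j') + (\<Sum>j<m*L. (w j)\<^sup>2 * (d (j mod L) - KM j j))"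
  proof -
    have "w j * w j' * E j j' = w j * w j' * KM j j' + (if j = j' then (w j)\<^sup>2 * (d (j mod L) - KM j j) else 0)"
      if "j < m*L" "j' < m*L" for j j'
      using that by (simp add: Eeq J_def algebra_simps power2_eq_square)
    then have "(\<Sum>j<m*L. \<Sum>j'<m*L. w j * w j' * E j j') = 
       (\<Sum>j<m*L. \<Sum>j'<m*L. w j * w j' * KM j j' + (if j = j' then (w j)\<^sup>2 * (d (j mod L) - KM j j) else 0))"
      by (intro sum.cong) auto
    also have "\<dots> = (\<Sum>j<m*L. \<Sum>j'<m*L. w j * w j' * KM j j') + (\<Sum>j<m*L. (w j)\<^sup>2 * (d (j mod L) - KM j j))"
      by (simp add: sum.distrib)
    finally show ?thesis .
  qed
  also have "(\<Sum>j<m*L. \<Sum>j'<m*L. w j * w j' * KM j j') = (\<Sum>i<L. \<Sum>j<L. c i * c j * KK k (M i) (M j))"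
  proof -
    have "(\<Sum>j<m*L. \<Sum>j'<m*L. w j * w j' * KM j j') = 
      (\<Sum>j<m*L. \<Sum>j'<m*L. (\<lambda>a b. c a * c b * KK k (M a) (M b) / (real m)\<^sup>2) (j mod L) (j' mod L))"
      by (simp add: w_def KM_def M'_def power2_eq_square)
    also have "\<dots> = (\<Sum>j<m*L. real m * (\<Sum>i'<L. c (j mod L) * c i' * KK k (M (j mod L)) (M i') / (real m)\<^sup>2))"
      by (subst sum_mod) simp
    also have "\<dots> = real m * (real m * (\<Sum>i<L. (\<Sum>i'<L. c i * c i' * KK k (M i) (M i') / (real m)\<^sup>2)))"
      by (subst sum_distrib_left[symmetric], subst sum_mod) simp
    also have "\<dots> = (\<Sum>i<L. \<Sum>j<L. c i * c j * KK k (M i) (M j))"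
      using m by (simp add: sum_distrib_left power2_eq_square)
    finally show ?thesis .
  qed
  also have "(\<Sum>j<m*L. (w j)\<^sup>2 * (d (j mod L) - KM j j)) = 
     (\<Sum>i<L. (c i)\<^sup>2 * (d i - KK k (M i) (M i))) / real m"
  proof -
    have "(\<Sum>j<m*L. (w j)\<^sup>2 * (d (j mod L) - KM j j)) = 
      (\<Sum>j<m*L. (\<lambda>i. (c i)\<^sup>2 * (d i - KK k (M i) (M i)) / (real m)\<^sup>2) (j mod L))"
      by (simp add: w_def KM_def M'_def power_divide)
    also have "\<dots> = real m * (\<Sum>i<L. (c i)\<^sup>2 * (d i - KK k (M i) (M i)) / (real m)\<^sup>2)"
      by (rule sum_mod)
    also have "\<dots> = (\<Sum>i<L. (c i)\<^sup>2 * (d i - KK k (M i) (M i))) / real m"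
      using m by (simp add: sum_divide_distrib[symmetric] power2_eq_square)
    finally show ?thesis .
  qed
  also have "(\<Sum>i<L. (c i)\<^sup>2 * (d i - KK k (M i) (M i))) \<le> (\<Sum>i<L. (c i)\<^sup>2 * 2)"
  proof (intro sum_mono mult_left_mono)
    fix i assume "i \<in> {..<L}"
    then have "pb (M i)" using MP by simp
    then have "\<bar>d i\<bar> \<le> 1" "\<bar>KK k (M i) (M i)\<bar> \<le> 1"
      using KK_bnd unfolding d_def by (auto intro!: abs_int_le simp: pb_def pb_meas bnd)
    then show "d i - KK k (M i) (M i) \<le> 2" by linarith
  qed simp
  finally show ?thesis using m by (simp add: sum_distrib_left[symmetric] mult.commute divide_right_mono)
qed

lemma psd:
  fixes M :: "nat \<Rightarrow> real measure" and c :: "nat \<Rightarrow> real"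
  assumes MP: "\<And>i. i < L \<Longrightarrow> pb (M i)"
  shows "0 \<le> (\<Sum>i<L. \<Sum>j<L. c i * c j * KK k (M i) (M j))"
proof (cases "L = 0")
  case True then show ?thesis by simp
next
  case False
  define Q where "Q = (\<Sum>i<L. \<Sum>j<L. c i * c j * KK k (M i) (M j))"
  define C where "C = 2 * (\<Sum>i<L. (c i)\<^sup>2)"
  have A: "0 \<le> Q + C / real m" if "m > 0" for m
    using psd_approx[OF MP, where m=m and c=c] False that unfolding Q_def C_def by auto
  show ?thesis
  proof (rule ccontr)
    assume "\<not> ?thesis"
    then have Qn: "Q < 0" unfolding Q_def by simp
    have C0: "C \<ge> 0" unfolding C_def by (simp add: sum_nonneg)
    obtain m :: nat where m: "real m > C / (- Q)" using reals_Archimedean2 by blast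
    have "C / (- Q) \<ge> 0" using C0 Qn by (simp add: divide_nonneg_neg)
    then have m0: "m > 0" using m by linarith
    have "C < real m * (- Q)" using m Qn pos_divide_less_eq[of "-Q" C "real m"] by simp
    then have "C / real m < - Q"
      using m0 pos_divide_less_eq[of "real m" C "-Q"] by (simp add: mult.commute)
    with A[OF m0] show False by simp
  qed
qed

end

locale fam = kern +
  fixes M :: "nat \<Rightarrow> real measure" and L :: nat
  assumes pbM: "\<And>i. i < L \<Longrightarrow> pb (M i)"
begin

definition BF :: "(nat \<Rightarrow> real) \<Rightarrow> (nat \<Rightarrow> real) \<Rightarrow> real" where
  "BF u v = (\<Sum>i<L. \<Sum>j<L. u i * v j * KK k (M i) (M j))"

abbreviation QF where "QF u \<equiv> BF u u"

lemma QF_nonneg: "0 \<le> QF u"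
  unfolding BF_def using psd[OF pbM] by simp

lemma BF_sym: "BF u v = BF v u"
  unfolding BF_def
proof (subst sum.swap, intro sum.cong refl)
  fix i j assume "i \<in> {..<L}" "j \<in> {..<L}"
  then have "KK k (M i) (M j) = KK k (M j) (M i)" using KK_sym pbM by simp
  then show "u j * v i * KK k (M j) (M i) = v i * u j * KK k (M i) (M j)" by simp
qed

lemma BF_add: "BF (\<lambda>i. u i + v i) w = BF u w + BF v w"
  unfolding BF_def by (simp add: algebra_simps sum.distrib)

lemma BF_scale: "BF (\<lambda>i. t * u i) w = t * BF u w"
  unfolding BF_def by (simp add: algebra_simps sum_distrib_left)

lemma BF_add2: "BF w (\<lambda>i. u i + v i) = BF w u + BF w v"
  using BF_add BF_sym by metis

lemma BF_scale2: "BF w (\<lambda>i. t * u i) = t * BF w u"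
  using BF_scale BF_sym by metis

lemma QF_add: "QF (\<lambda>i. u i + v i) = QF u + 2 * BF u v + QF v"
  by (simp add: BF_add BF_add2 BF_sym[of v u])

lemma CS: "(BF u v)\<^sup>2 \<le> QF u * QF v"
proof -
  have pos: "0 \<le> QF u + 2 * t * BF u v + t\<^sup>2 * QF v" for t
  proof -
    have "0 \<le> QF (\<lambda>i. u i + t * v i)" by (rule QF_nonneg)
    also have "\<dots> = QF u + 2 * t * BF u v + t\<^sup>2 * QF v"
      by (simp add: QF_add BF_scale BF_scale2 power2_eq_square)
    finally show ?thesis .
  qed
  show ?thesis
  proof (cases "QF v = 0")
    case True
    have "BF u v = 0"
    proof (rule ccontr)
      assume B: "BF u v \<noteq> 0"
      have "0 \<le> QF u + 2 * (- (QF u + 1) / (2 * BF u v)) * BF u v"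
        using pos[of "- (QF u + 1) / (2 * BF u v)"] True by simp
      also have "\<dots> = -1" using B by (simp add: field_simps)
      finally show False by simp
    qed
    then show ?thesis using QF_nonneg[of u] QF_nonneg[of v] by simp
  next
    case False
    then have Qp: "QF v > 0" using QF_nonneg[of v] by simp
    have "0 \<le> QF u + 2 * (- BF u v / QF v) * BF u v + (- BF u v / QF v)\<^sup>2 * QF v"
      by (rule pos)
    also have "\<dots> = QF u - (BF u v)\<^sup>2 / QF v"
      using Qp by (simp add: field_simps power2_eq_square)
    finally show ?thesis using Qp by (simp add: field_simps)
  qed
qed

lemma tri: "sqrt (QF (\<lambda>i. u i + v i)) \<le> sqrt (QF u) + sqrt (QF v)"
proof -
  have "BF u v \<le> sqrt (QF u) * sqrt (QF v)"
  proof -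
    have "BF u v \<le> \<bar>BF u v\<bar>" by simp
    also have "\<dots> = sqrt ((BF u v)\<^sup>2)" by simp
    also have "\<dots> \<le> sqrt (QF u * QF v)" using CS by (rule real_sqrt_le_mono)
    finally show ?thesis by (simp add: real_sqrt_mult)
  qed
  then have "QF (\<lambda>i. u i + v i) \<le> (sqrt (QF u) + sqrt (QF v))\<^sup>2"
    using QF_nonneg[of u] QF_nonneg[of v] by (simp add: QF_add power2_sum)
  then have "sqrt (QF (\<lambda>i. u i + v i)) \<le> sqrt ((sqrt (QF u) + sqrt (QF v))\<^sup>2)"
    by (rule real_sqrt_le_mono)
  also have "\<dots> = sqrt (QF u) + sqrt (QF v)"
    using QF_nonneg[of u] QF_nonneg[of v] by simp
  finally show ?thesis .
qed

end




lemma prob_emeasure: "prob_space M \<Longrightarrow> emeasure M A = ennreal (measure M A)"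
proof -
  assume "prob_space M"
  then interpret prob_space M .
  show ?thesis by (rule emeasure_eq_measure)
qed

locale setting =
  fixes k :: "real \<Rightarrow> real \<Rightarrow> real"
    and P :: "'a \<Rightarrow> real measure" and \<Theta> :: "'a set"
    and \<theta>star :: 'a and PX Q :: "real measure" and \<epsilon> :: real
    and \<pi> :: "real \<Rightarrow> real" and PXM :: "(real \<times> bool) measure" and n :: nat
    and thetahat :: "(nat \<Rightarrow> real \<times> bool) \<Rightarrow> 'a"
  assumes kernel: "pd_kernel k" "\<And>x y. \<bar>k x y\<bar> \<le> 1"
      "(\<lambda>(x, y). k x y) \<in> borel_measurable borel"
    and model: "\<And>\<theta>. \<theta> \<in> \<Theta> \<Longrightarrow> prob_space (P \<theta>) \<and> sets (P \<theta>) = sets borel"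
    and theta_star: "\<theta>star \<in> \<Theta>"
    and Q: "prob_space Q" "sets Q = sets borel"
    and eps: "0 \<le> \<epsilon>" "\<epsilon> < 1"
    and PX: "prob_space PX" "sets PX = sets borel"
    and mixture: "\<And>A. A \<in> sets borel \<Longrightarrow>
                    measure PX A = (1 - \<epsilon>) * measure (P \<theta>star) A + \<epsilon> * measure Q A"
    and pi_meas: "\<pi> \<in> borel_measurable borel" and pi_range: "\<And>x. 0 \<le> \<pi> x \<and> \<pi> x \<le> 1"
    and PXM: "prob_space PXM" "sets PXM = sets (borel \<Otimes>\<^sub>M count_space UNIV)"
    and PXM_marg: "distr PXM borel fst = PX"
    and PXM_cond: "\<And>A. A \<in> sets borel \<Longrightarrow>
                    measure PXM (A \<times> {True}) = (\<integral>x\<in>A. \<pi> x \<partial>PX)"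
    and pistar_pos: "(\<integral>x. \<pi> x \<partial>P \<theta>star) > 0"
    and n_pos: "n > 0"
    and estimator: "\<And>s. s \<in> space (\<Pi>\<^sub>M i\<in>{..<n}. PXM) \<Longrightarrow>
         thetahat s \<in> \<Theta> \<and>
         (\<forall>\<theta>\<in>\<Theta>. mmd_objective k P n s (thetahat s) \<le> mmd_objective k P n s \<theta>)"
begin

sublocale kern k
  using kernel unfolding pd_kernel_def by unfold_locales auto

abbreviation "mu \<equiv> P \<theta>star"

lemma pb_P: "\<theta> \<in> \<Theta> \<Longrightarrow> pb (P \<theta>)" using model by (simp add: pb_def)
lemma pb_mu: "pb mu" using pb_P theta_star by simp
lemma pb_Q: "pb Q" using Q by (simp add: pb_def)
lemma pb_PX: "pb PX" using PX by (simp add: pb_def)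

lemma pi_meas'[measurable]: "\<pi> \<in> borel_measurable borel" by (rule pi_meas)

lemma mix_nn:
  assumes u: "u \<in> borel_measurable borel"
  shows "(\<integral>\<^sup>+x. u x \<partial>PX) = ennreal (1-\<epsilon>) * (\<integral>\<^sup>+x. u x \<partial>mu) + ennreal \<epsilon> * (\<integral>\<^sup>+x. u x \<partial>Q)"
  using u
proof (induct rule: borel_measurable_induct)
  case (cong f g)
  then have "f = g" by auto
  then show ?case using cong by simp
next
  case (set A)
  have "(\<integral>\<^sup>+x. indicator A x \<partial>PX) = emeasure PX A"
    using set PX by (intro nn_integral_indicator) simp
  also have "\<dots> = ennreal (measure PX A)"
    using PX by (simp add: prob_emeasure)
  also have "\<dots> = ennreal ((1 - \<epsilon>) * measure mu A + \<epsilon> * measure Q A)"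
    using mixture set by simp
  also have "\<dots> = ennreal (1-\<epsilon>) * ennreal (measure mu A) + ennreal \<epsilon> * ennreal (measure Q A)"
    using eps by (simp add: ennreal_plus ennreal_mult)
  also have "\<dots> = ennreal (1-\<epsilon>) * (\<integral>\<^sup>+x. indicator A x \<partial>mu) + ennreal \<epsilon> * (\<integral>\<^sup>+x. indicator A x \<partial>Q)"
    using set pb_mu pb_Q
    by (simp add: pb_def prob_emeasure nn_integral_indicator)
  finally show ?case .
next
  case (mult u c)
  have m: "u \<in> borel_measurable PX" "u \<in> borel_measurable mu" "u \<in> borel_measurable Q"
    using mult pb_PX pb_mu pb_Q by (auto simp: pb_meas)
  show ?case using mult m by (simp add: nn_integral_cmult algebra_simps)
next
  case (add u v)
  have m: "u \<in> borel_measurable PX" "u \<in> borel_measurable mu" "u \<in> borel_measurable Q"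
    "v \<in> borel_measurable PX" "v \<in> borel_measurable mu" "v \<in> borel_measurable Q"
    using add pb_PX pb_mu pb_Q by (auto simp: pb_meas)
  show ?case using add m by (simp add: nn_integral_add algebra_simps)
next
  case (seq U)
  have m: "U i \<in> borel_measurable PX" "U i \<in> borel_measurable mu" "U i \<in> borel_measurable Q" for i
    using seq pb_PX pb_mu pb_Q by (auto simp: pb_meas)
  have inc: "incseq (\<lambda>i. \<integral>\<^sup>+x. U i x \<partial>M)" for M
    using seq(4) by (auto simp: incseq_def le_fun_def intro!: nn_integral_mono)
  have "(\<integral>\<^sup>+x. (SUP i. U i) x \<partial>PX) = (SUP i. \<integral>\<^sup>+x. U i x \<partial>PX)"
    using nn_integral_monotone_convergence_SUP[OF seq(4) m(1)] by (simp add: SUP_apply image_comp)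
  also have "\<dots> = (SUP i. ennreal (1-\<epsilon>) * (\<integral>\<^sup>+x. U i x \<partial>mu) + ennreal \<epsilon> * (\<integral>\<^sup>+x. U i x \<partial>Q))"
    using seq by simp
  also have "\<dots> = (SUP i. ennreal (1-\<epsilon>) * (\<integral>\<^sup>+x. U i x \<partial>mu)) + (SUP i. ennreal \<epsilon> * (\<integral>\<^sup>+x. U i x \<partial>Q))"
    using inc by (intro ennreal_SUP_add) (auto simp: incseq_def intro: mult_left_mono)
  also have "\<dots> = ennreal (1-\<epsilon>) * (SUP i. (\<integral>\<^sup>+x. U i x \<partial>mu)) + ennreal \<epsilon> * (SUP i. (\<integral>\<^sup>+x. U i x \<partial>Q))"
    by (simp add: SUP_mult_left_ennreal)
  also have "\<dots> = ennreal (1-\<epsilon>) * (\<integral>\<^sup>+x. (SUP i. U i) x \<partial>mu) + ennreal \<epsilon> * (\<integral>\<^sup>+x. (SUP i. U i) x \<partial>Q)"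
    using nn_integral_monotone_convergence_SUP[OF seq(4) m(2)] nn_integral_monotone_convergence_SUP[OF seq(4) m(3)]
    by (simp add: SUP_apply image_comp)
  finally show ?case .
qed

lemma int_shift: fixes f :: "real \<Rightarrow> real" shows "pb M \<Longrightarrow> f \<in> borel_measurable borel \<Longrightarrow> (\<And>x. \<bar>f x\<bar> \<le> B) \<Longrightarrow>
   (\<integral>x. f x + B \<partial>M) = (\<integral>x. f x \<partial>M) + B"
proof -
  assume a: "pb M" "f \<in> borel_measurable borel" "\<And>x. \<bar>f x\<bar> \<le> B"
  then have "0 \<le> B" by (metis abs_ge_zero order_trans)
  then show ?thesis using a
    by (subst Bochner_Integration.integral_add) 
     (auto intro!: integrable_bnd[where B=B] simp: pb_def pb_meas prob_space.prob_space)
qed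

lemma int_nn: fixes g :: "real \<Rightarrow> real" shows "pb M \<Longrightarrow> g \<in> borel_measurable borel \<Longrightarrow> (\<And>x. 0 \<le> g x \<and> g x \<le> B) \<Longrightarrow>
   (\<integral>\<^sup>+x. ennreal (g x) \<partial>M) = ennreal (\<integral>x. g x \<partial>M)"
  by (intro nn_integral_eq_integral) (auto intro!: integrable_bnd[where B=B] simp: pb_def pb_meas)

lemma mix_int:
  assumes f[measurable]: "f \<in> borel_measurable borel" and B: "\<And>x. \<bar>f x\<bar> \<le> B"
  shows "(\<integral>x. f x \<partial>PX) = (1-\<epsilon>) * (\<integral>x. f x \<partial>mu) + \<epsilon> * (\<integral>x. f x \<partial>Q)"
proof -
  define g where "g x = f x + B" for x
  have g[measurable]: "g \<in> borel_measurable borel" unfolding g_def by simp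
  have gb: "0 \<le> g x \<and> g x \<le> 2 * B" for x using B[of x] unfolding g_def by auto
  have nn: "0 \<le> (\<integral>x. g x \<partial>M)" for M using gb by (intro integral_nonneg_AE) auto
  have "ennreal (\<integral>x. g x \<partial>PX) = ennreal (1-\<epsilon>) * ennreal (\<integral>x. g x \<partial>mu) + ennreal \<epsilon> * ennreal (\<integral>x. g x \<partial>Q)"
    using mix_nn[of "\<lambda>x. ennreal (g x)"] int_nn[OF pb_PX g gb] int_nn[OF pb_mu g gb] int_nn[OF pb_Q g gb]
    by simp
  also have "\<dots> = ennreal ((1-\<epsilon>) * (\<integral>x. g x \<partial>mu) + \<epsilon> * (\<integral>x. g x \<partial>Q))"
    using eps nn by (simp add: ennreal_plus ennreal_mult)
  finally have "(\<integral>x. g x \<partial>PX) = (1-\<epsilon>) * (\<integral>x. g x \<partial>mu) + \<epsilon> * (\<integral>x. g x \<partial>Q)"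
    using nn eps by (subst (asm) ennreal_inj) auto
  then show ?thesis
    unfolding g_def using int_shift[OF pb_PX f B] int_shift[OF pb_mu f B] int_shift[OF pb_Q f B]
    by (simp add: algebra_simps)
qed

definition "p0 = (\<integral>x. \<pi> x \<partial>PX)"
definition "pis = (\<integral>x. \<pi> x \<partial>mu)"
definition "qQ = (\<integral>x. \<pi> x \<partial>Q)"

lemma int01: "pb M \<Longrightarrow> 0 \<le> (\<integral>x. \<pi> x \<partial>M) \<and> (\<integral>x. \<pi> x \<partial>M) \<le> 1"
  using pi_range abs_int_le[of M \<pi> 1]
  by (auto intro!: integral_nonneg_AE simp: pb_def pb_meas abs_le_iff)

lemma p0_eq: "p0 = (1-\<epsilon>) * pis + \<epsilon> * qQ"
  unfolding p0_def pis_def qQ_def using pi_range by (intro mix_int[where B=1]) auto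

lemma pis_pos: "pis > 0" using pistar_pos by (simp add: pis_def)
lemma qQ01: "0 \<le> qQ" "qQ \<le> 1" using int01[OF pb_Q] by (auto simp: qQ_def)
lemma pis01: "pis \<le> 1" using int01[OF pb_mu] by (auto simp: pis_def)

lemma p0_ge: "p0 \<ge> (1-\<epsilon>) * pis"
  using p0_eq qQ01 eps by simp

lemma p0_pos: "p0 > 0"
proof -
  have "(1-\<epsilon>) * pis > 0" using eps pis_pos by simp
  then show ?thesis using p0_ge by linarith
qed

lemma p0_le1: "p0 \<le> 1" using int01[OF pb_PX] by (simp add: p0_def)

definition "nu = density PX (\<lambda>x. ennreal (\<pi> x / p0))"

lemma nu_int:
  assumes "f \<in> borel_measurable borel"
  shows "(\<integral>x. f x \<partial>nu) = (\<integral>x. \<pi> x / p0 * f x \<partial>PX)"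
  unfolding nu_def using assms pb_PX p0_pos pi_range
  by (subst integral_density) (auto simp: pb_meas)

lemma pb_nu: "pb nu"
proof -
  have s: "sets nu = sets borel" using PX by (simp add: nu_def)
  have "emeasure nu (space nu) = (\<integral>\<^sup>+x. ennreal (\<pi> x / p0) * indicator UNIV x \<partial>PX)"
    unfolding nu_def using pb_PX sets.top[of PX] by (subst emeasure_density) (auto simp: pb_meas pb_space)
  also have "\<dots> = (\<integral>\<^sup>+x. ennreal (\<pi> x / p0) \<partial>PX)" by simp
  also have "\<dots> = ennreal (\<integral>x. \<pi> x / p0 \<partial>PX)"
    using pb_PX p0_pos pi_range by (intro int_nn[where B="1/p0"]) (auto simp: divide_right_mono)
  also have "\<dots> = 1" using p0_pos by (simp add: p0_def)
  finally show ?thesis unfolding pb_def using s by (intro conjI prob_spaceI) auto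
qed

lemma nu_mix:
  assumes f[measurable]: "f \<in> borel_measurable borel" and B: "\<And>x. \<bar>f x\<bar> \<le> B"
  shows "(\<integral>x. f x \<partial>nu) = ((1-\<epsilon>) * (\<integral>x. \<pi> x * f x \<partial>mu) + \<epsilon> * (\<integral>x. \<pi> x * f x \<partial>Q)) / p0"
proof -
  have b: "\<bar>\<pi> x / p0 * f x\<bar> \<le> B / p0" for x
  proof -
    have "\<bar>\<pi> x / p0 * f x\<bar> = \<pi> x / p0 * \<bar>f x\<bar>" using pi_range[of x] p0_pos by (simp add: abs_mult)
    also have "\<dots> \<le> 1 / p0 * B" using pi_range[of x] p0_pos B[of x]
      by (intro mult_mono) (auto simp: divide_right_mono)
    finally show ?thesis by simp
  qed
  have "(\<integral>x. f x \<partial>nu) = (\<integral>x. \<pi> x / p0 * f x \<partial>PX)" by (rule nu_int[OF f])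
  also have "\<dots> = (1-\<epsilon>) * (\<integral>x. \<pi> x / p0 * f x \<partial>mu) + \<epsilon> * (\<integral>x. \<pi> x / p0 * f x \<partial>Q)"
    using b by (intro mix_int) auto
  also have "\<dots> = ((1-\<epsilon>) * (\<integral>x. \<pi> x * f x \<partial>mu) + \<epsilon> * (\<integral>x. \<pi> x * f x \<partial>Q)) / p0"
    using p0_pos by (simp add: field_simps)
  finally show ?thesis .
qed

lemma PXM_fst[measurable]: "fst \<in> borel_measurable PXM"
  using PXM(2) measurable_fst[of borel "count_space UNIV"]
  by (subst measurable_cong_sets[OF PXM(2) refl]) simp

lemma PXM_snd[measurable]: "snd \<in> measurable PXM (count_space UNIV)"
  using PXM(2) measurable_snd[of borel "count_space UNIV"]
  by (subst measurable_cong_sets[OF PXM(2) refl]) simp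

lemma PXM_space: "space PXM = UNIV"
  using sets_eq_imp_space_eq[OF PXM(2)] by (simp add: space_pair_measure)

definition "DT = density PXM (\<lambda>z. ennreal (if snd z then 1 else 0))"

lemma DT_distr: "distr DT borel fst = density PX (\<lambda>x. ennreal (\<pi> x))"
proof (rule measure_eqI)
  show "sets (distr DT borel fst) = sets (density PX (\<lambda>x. ennreal (\<pi> x)))"
    using PX by simp
  fix A assume "A \<in> sets (distr DT borel fst)"
  then have A[measurable]: "A \<in> sets borel" by simp
  have fstDT: "fst \<in> measurable DT borel" unfolding DT_def by simp
  have AT: "A \<times> {True} \<in> sets PXM" using PXM(2) A by (simp add: pair_measureI)
  have "emeasure (distr DT borel fst) A = emeasure DT (fst -` A \<inter> space DT)"
    by (rule emeasure_distr[OF fstDT A])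
  also have "\<dots> = (\<integral>\<^sup>+z. ennreal (if snd z then 1 else 0) * indicator (fst -` A \<inter> space PXM) z \<partial>PXM)"
    unfolding DT_def using measurable_sets[OF PXM_fst A] by (subst emeasure_density) (auto simp: PXM_space)
  also have "\<dots> = (\<integral>\<^sup>+z. indicator (A \<times> {True}) z \<partial>PXM)"
    by (intro nn_integral_cong) (auto simp: PXM_space indicator_def)
  also have "\<dots> = emeasure PXM (A \<times> {True})" using AT by simp
  also have "\<dots> = ennreal (\<integral>x. indicator A x * \<pi> x \<partial>PX)"
    using PXM_cond[OF A] prob_emeasure[OF PXM(1)] by (simp add: set_lebesgue_integral_def)
  also have "\<dots> = (\<integral>\<^sup>+x. ennreal (\<pi> x * indicator A x) \<partial>PX)"
    using pi_range by (subst int_nn[OF pb_PX, where B=1]) (auto simp: mult.commute indicator_def)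
  also have "\<dots> = emeasure (density PX (\<lambda>x. ennreal (\<pi> x))) A"
    using PX by (subst emeasure_density) (auto simp: pb_meas pb_PX indicator_def intro!: nn_integral_cong)
  finally show "emeasure (distr DT borel fst) A = emeasure (density PX (\<lambda>x. ennreal (\<pi> x))) A" .
qed

lemma PXM_obs:
  assumes f[measurable]: "f \<in> borel_measurable borel"
  shows "(\<integral>z. (if snd z then f (fst z) else 0) \<partial>PXM) = (\<integral>x. \<pi> x * f x \<partial>PX)"
proof -
  have "(\<integral>z. (if snd z then f (fst z) else 0) \<partial>PXM) = (\<integral>z. (if snd z then 1 else 0) *\<^sub>R f (fst z) \<partial>PXM)"
    by (intro Bochner_Integration.integral_cong) auto
  also have "\<dots> = (\<integral>z. f (fst z) \<partial>DT)"
    unfolding DT_def by (subst integral_density) auto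
  also have "\<dots> = (\<integral>x. f x \<partial>distr DT borel fst)"
    unfolding DT_def by (subst integral_distr) auto
  also have "\<dots> = (\<integral>x. \<pi> x * f x \<partial>PX)"
    unfolding DT_distr using PX pi_range by (subst integral_density) (auto simp: pb_meas pb_PX)
  finally show ?thesis .
qed

lemma PXM_obs_nu:
  assumes f[measurable]: "f \<in> borel_measurable borel"
  shows "(\<integral>z. (if snd z then f (fst z) else 0) \<partial>PXM) = p0 * (\<integral>x. f x \<partial>nu)"
  unfolding PXM_obs[OF f] nu_int[OF f] using p0_pos
  by (simp add: field_simps flip: integral_mult_right_zero)

definition "uu x = (1-\<epsilon>) / p0 * \<pi> x - 1" for x
definition "vv x = \<epsilon> / p0 * \<pi> x" for x
definition "TT = (\<integral>x. \<bar>uu x\<bar> \<partial>mu) + (\<integral>x. \<bar>vv x\<bar> \<partial>Q)"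

lemma uu_meas[measurable]: "uu \<in> borel_measurable borel" unfolding uu_def by simp
lemma vv_meas[measurable]: "vv \<in> borel_measurable borel" unfolding vv_def by simp
lemma uu_bnd: "\<bar>uu x\<bar> \<le> (1-\<epsilon>)/p0 + 1"
proof -
  have a0: "0 \<le> (1-\<epsilon>) / p0" using eps p0_pos by simp
  have "0 \<le> (1-\<epsilon>) / p0 * \<pi> x" by (rule mult_nonneg_nonneg[OF a0]) (use pi_range in auto)
  moreover have "(1-\<epsilon>) / p0 * \<pi> x \<le> (1-\<epsilon>) / p0" 
    using a0 pi_range[of x] mult_left_mono[of "\<pi> x" 1 "(1-\<epsilon>) / p0"] by simp
  ultimately show ?thesis unfolding uu_def by linarith
qed
lemma vv_bnd: "\<bar>vv x\<bar> \<le> \<epsilon>/p0"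
proof -
  have a0: "0 \<le> \<epsilon> / p0" using eps p0_pos by simp
  then show ?thesis unfolding vv_def using pi_range[of x] mult_left_mono[of "\<pi> x" 1 "\<epsilon> / p0"]
    using eps p0_pos by (simp add: abs_mult)
qed

lemma diff_repr:
  assumes f[measurable]: "f \<in> borel_measurable borel" and B: "\<And>x. \<bar>f x\<bar> \<le> B"
  shows "(\<integral>x. f x \<partial>nu) - (\<integral>x. f x \<partial>mu) = (\<integral>x. uu x * f x \<partial>mu) + (\<integral>x. vv x * f x \<partial>Q)"
proof -
  have B0: "0 \<le> B" using B by (metis abs_ge_zero order_trans)
  have bpf: "\<bar>\<pi> x * f x\<bar> \<le> B" for x
  proof -
    have "\<bar>\<pi> x * f x\<bar> = \<pi> x * \<bar>f x\<bar>" using pi_range[of x] by (simp add: abs_mult)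
    also have "\<dots> \<le> 1 * \<bar>f x\<bar>" using pi_range[of x] by (intro mult_right_mono) auto
    finally show ?thesis using B[of x] by simp
  qed
  have i1: "integrable mu (\<lambda>x. \<pi> x * f x)" "integrable mu f" 
    using pb_mu bpf B by (auto intro!: integrable_bnd[where B=B] simp: pb_def pb_meas)
  have "(\<integral>x. uu x * f x \<partial>mu) = (\<integral>x. (1-\<epsilon>)/p0 * (\<pi> x * f x) - f x \<partial>mu)"
    unfolding uu_def by (simp add: algebra_simps)
  also have "\<dots> = (1-\<epsilon>)/p0 * (\<integral>x. \<pi> x * f x \<partial>mu) - (\<integral>x. f x \<partial>mu)"
    using i1 by simp
  finally have e1: "(\<integral>x. uu x * f x \<partial>mu) = (1-\<epsilon>)/p0 * (\<integral>x. \<pi> x * f x \<partial>mu) - (\<integral>x. f x \<partial>mu)" .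
  have e2: "(\<integral>x. vv x * f x \<partial>Q) = \<epsilon>/p0 * (\<integral>x. \<pi> x * f x \<partial>Q)"
    unfolding vv_def by (simp add: algebra_simps)
  show ?thesis unfolding e1 e2 nu_mix[OF f B] using p0_pos by (simp add: field_simps)
qed

lemma repr_bnd:
  assumes f[measurable]: "f \<in> borel_measurable borel" and B: "\<And>x. \<bar>f x\<bar> \<le> B"
  shows "\<bar>(\<integral>x. uu x * f x \<partial>mu) + (\<integral>x. vv x * f x \<partial>Q)\<bar> \<le> B * TT"
proof -
  have B0: "0 \<le> B" using B by (metis abs_ge_zero order_trans)
  have a: "\<bar>\<integral>x. w x * f x \<partial>M\<bar> \<le> B * (\<integral>x. \<bar>w x\<bar> \<partial>M)"
    if M: "pb M" and w[measurable]: "w \<in> borel_measurable borel" and wb: "\<And>x. \<bar>w x\<bar> \<le> C" for M w C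
  proof -
    have C0: "0 \<le> C" using wb by (metis abs_ge_zero order_trans)
    have "\<bar>\<integral>x. w x * f x \<partial>M\<bar> \<le> (\<integral>x. \<bar>w x * f x\<bar> \<partial>M)" by (rule integral_abs_bound)
    also have "\<dots> \<le> (\<integral>x. B * \<bar>w x\<bar> \<partial>M)"
    proof (intro integral_mono)
      show "integrable M (\<lambda>x. \<bar>w x * f x\<bar>)" using M wb B C0
        by (intro integrable_bnd[where B="C*B"]) (auto simp: pb_def pb_meas abs_mult intro!: mult_mono)
      show "integrable M (\<lambda>x. B * \<bar>w x\<bar>)" using M wb B0
        by (intro integrable_bnd[where B="B*C"]) (auto simp: pb_def pb_meas abs_mult intro!: mult_mono)
      fix x show "\<bar>w x * f x\<bar> \<le> B * \<bar>w x\<bar>" using B[of x] mult_right_mono[of "\<bar>f x\<bar>" B "\<bar>w x\<bar>"]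
        by (simp add: abs_mult mult.commute)
    qed
    also have "\<dots> = B * (\<integral>x. \<bar>w x\<bar> \<partial>M)" by simp
    finally show ?thesis .
  qed
  have "\<bar>(\<integral>x. uu x * f x \<partial>mu) + (\<integral>x. vv x * f x \<partial>Q)\<bar> \<le> 
     \<bar>\<integral>x. uu x * f x \<partial>mu\<bar> + \<bar>\<integral>x. vv x * f x \<partial>Q\<bar>" by (rule abs_triangle_ineq)
  also have "\<dots> \<le> B * (\<integral>x. \<bar>uu x\<bar> \<partial>mu) + B * (\<integral>x. \<bar>vv x\<bar> \<partial>Q)"
    using a[OF pb_mu uu_meas uu_bnd] a[OF pb_Q vv_meas vv_bnd] by (rule add_mono)
  finally show ?thesis by (simp add: TT_def algebra_simps)
qed

lemma TT_nonneg: "0 \<le> TT" unfolding TT_def by (intro add_nonneg_nonneg integral_nonneg_AE) auto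

lemma mmd_nu_mu: "mmd k nu mu \<le> TT"
proof -
  define gnu where "gnu x = (\<integral>y. k x y \<partial>nu)" for x
  define gmu where "gmu x = (\<integral>y. k x y \<partial>mu)" for x
  have gm[measurable]: "gnu \<in> borel_measurable borel" "gmu \<in> borel_measurable borel"
    unfolding gnu_def gmu_def using pb_nu pb_mu by auto
  have gb: "\<bar>gnu x\<bar> \<le> 1" "\<bar>gmu x\<bar> \<le> 1" for x
    unfolding gnu_def gmu_def using inner_bnd pb_nu pb_mu by auto
  define hw where "hw x = gnu x - gmu x" for x
  have hm[measurable]: "hw \<in> borel_measurable borel" unfolding hw_def by simp
  have hb: "\<bar>hw x\<bar> \<le> TT" for x
  proof -
    have "hw x = (\<integral>y. uu y * k x y \<partial>mu) + (\<integral>y. vv y * k x y \<partial>Q)"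
      unfolding hw_def gnu_def gmu_def using bnd by (intro diff_repr) auto
    also have "\<bar>\<dots>\<bar> \<le> 1 * TT" using bnd by (intro repr_bnd) auto
    finally show ?thesis by simp
  qed
  have int: "integrable M g" if "pb M" "g \<in> borel_measurable borel" "\<And>x. \<bar>g x\<bar> \<le> 1" for M and g :: "real \<Rightarrow> real"
    using that by (intro integrable_bnd[where B=1]) (auto simp: pb_def pb_meas)
  have sw: "(\<integral>x. gnu x \<partial>mu) = (\<integral>x. gmu x \<partial>nu)"
    using KK_sym[OF pb_mu pb_nu] unfolding KK_def gnu_def gmu_def .
  have "mmd_sq k nu mu = (\<integral>x. gnu x \<partial>nu) - 2 * (\<integral>x. gmu x \<partial>nu) + (\<integral>x. gmu x \<partial>mu)"
    unfolding mmd_sq_def gnu_def gmu_def ..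
  also have "\<dots> = (\<integral>x. hw x \<partial>nu) - (\<integral>x. hw x \<partial>mu)"
    unfolding hw_def using int[OF pb_nu gm(1) gb(1)] int[OF pb_nu gm(2) gb(2)]
      int[OF pb_mu gm(1) gb(1)] int[OF pb_mu gm(2) gb(2)] sw
    by simp
  also have "\<dots> = (\<integral>x. uu x * hw x \<partial>mu) + (\<integral>x. vv x * hw x \<partial>Q)"
    using hb by (intro diff_repr) auto
  finally have "mmd_sq k nu mu = (\<integral>x. uu x * hw x \<partial>mu) + (\<integral>x. vv x * hw x \<partial>Q)" .
  also have "\<dots> \<le> \<bar>\<dots>\<bar>" by simp
  also have "\<dots> \<le> TT * TT" using hb by (intro repr_bnd) auto
  finally have "mmd_sq k nu mu \<le> TT\<^sup>2" by (simp add: power2_eq_square)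
  then have "mmd k nu mu \<le> sqrt (TT\<^sup>2)" unfolding mmd_def by (rule real_sqrt_le_mono)
  then show ?thesis using TT_nonneg by simp
qed

definition "AA = (\<integral>x. \<bar>\<pi> x - pis\<bar> \<partial>mu)"
definition "VV = (\<integral>x. (\<pi> x - pis)\<^sup>2 \<partial>mu)"

lemma AA_le: "AA \<le> sqrt VV"
proof -
  have "AA\<^sup>2 \<le> (\<integral>x. \<bar>\<pi> x - pis\<bar>\<^sup>2 \<partial>mu)"
    unfolding AA_def
  proof (rule sq_int_le[where B=2])
    show "prob_space mu" using pb_mu by (simp add: pb_def)
    show "(\<lambda>x. \<bar>\<pi> x - pis\<bar>) \<in> borel_measurable mu" using pb_mu by (simp add: pb_meas)
    fix x show "\<bar>\<bar>\<pi> x - pis\<bar>\<bar> \<le> 2" using pi_range[of x] pis01 pis_pos by auto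
  qed
  also have "\<dots> = VV" unfolding VV_def by simp
  finally have "sqrt (AA\<^sup>2) \<le> sqrt VV" by (rule real_sqrt_le_mono)
  moreover have "AA \<ge> 0" unfolding AA_def by (intro integral_nonneg_AE) auto
  ultimately show ?thesis by simp
qed

lemma TT_le: "TT \<le> ((1-\<epsilon>) * AA + 2 * \<epsilon> * qQ) / p0"
proof -
  have iv: "(\<integral>x. \<bar>vv x\<bar> \<partial>Q) = \<epsilon> / p0 * qQ"
  proof -
    have "(\<integral>x. \<bar>vv x\<bar> \<partial>Q) = (\<integral>x. \<epsilon> / p0 * \<pi> x \<partial>Q)"
      unfolding vv_def using eps p0_pos pi_range by (intro Bochner_Integration.integral_cong) (auto simp: abs_mult)
    then show ?thesis by (simp add: qQ_def)
  qed
  have pw: "\<bar>uu x\<bar> \<le> (1-\<epsilon>)/p0 * \<bar>\<pi> x - pis\<bar> + \<epsilon> * qQ / p0" for x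
  proof -
    have one: "(1-\<epsilon>)/p0 * pis + \<epsilon> * qQ / p0 = 1"
      using p0_pos p0_eq by (simp add: field_simps)
    have "uu x = (1-\<epsilon>)/p0 * \<pi> x - ((1-\<epsilon>)/p0 * pis + \<epsilon> * qQ / p0)"
      unfolding uu_def one ..
    also have "\<dots> = (1-\<epsilon>)/p0 * (\<pi> x - pis) - \<epsilon> * qQ / p0"
      by (simp add: right_diff_distrib)
    finally have "uu x = (1-\<epsilon>)/p0 * (\<pi> x - pis) - \<epsilon> * qQ / p0" .
    moreover have "\<bar>(1-\<epsilon>)/p0 * (\<pi> x - pis)\<bar> = (1-\<epsilon>)/p0 * \<bar>\<pi> x - pis\<bar>"
      using eps p0_pos by (simp add: abs_mult)
    moreover have "0 \<le> \<epsilon> * qQ / p0" using eps p0_pos qQ01 by simp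
    ultimately show ?thesis by linarith
  qed
  have pd: "\<bar>\<bar>\<pi> x - pis\<bar>\<bar> \<le> 2" for x using pi_range[of x] pis01 pis_pos by auto
  have ia: "integrable mu (\<lambda>x. \<bar>\<pi> x - pis\<bar>)"
    using pb_mu pd by (intro integrable_bnd[where B=2]) (auto simp: pb_def pb_meas)
  have "(\<integral>x. \<bar>uu x\<bar> \<partial>mu) \<le> (\<integral>x. (1-\<epsilon>)/p0 * \<bar>\<pi> x - pis\<bar> + \<epsilon> * qQ / p0 \<partial>mu)"
  proof (rule integral_mono[OF _ _ pw])
    show "integrable mu (\<lambda>x. \<bar>uu x\<bar>)" using pb_mu uu_bnd
      by (intro integrable_bnd[where B="(1-\<epsilon>)/p0 + 1"]) (auto simp: pb_def pb_meas)
    show "integrable mu (\<lambda>x. (1-\<epsilon>)/p0 * \<bar>\<pi> x - pis\<bar> + \<epsilon> * qQ / p0)"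
      using ia pb_mu by (auto simp: pb_def prob_space.finite_measure intro!: finite_measure.integrable_const)
  qed
  also have "\<dots> = (1-\<epsilon>)/p0 * AA + \<epsilon> * qQ / p0"
    using ia pb_mu by (subst Bochner_Integration.integral_add)
      (auto simp: AA_def pb_def prob_space.prob_space prob_space.finite_measure intro!: finite_measure.integrable_const)
  finally have "(\<integral>x. \<bar>uu x\<bar> \<partial>mu) \<le> (1-\<epsilon>)/p0 * AA + \<epsilon> * qQ / p0" .
  then have "TT \<le> (1-\<epsilon>)/p0 * AA + \<epsilon> * qQ / p0 + \<epsilon> / p0 * qQ" unfolding TT_def iv by linarith
  also have "\<dots> = ((1-\<epsilon>) * AA + 2 * \<epsilon> * qQ) / p0"
    using p0_pos by (simp add: field_simps)
  finally show ?thesis .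
qed

end




context fam
begin

definition ev :: "nat \<Rightarrow> nat \<Rightarrow> real" where "ev j = (\<lambda>i. if i = j then 1 else 0)"

lemma BF_e_left: "j < L \<Longrightarrow> BF (ev j) v = (\<Sum>i<L. v i * KK k (M j) (M i))"
proof -
  assume j: "j < L"
  have "BF (ev j) v = (\<Sum>i<L. if i = j then (\<Sum>i'<L. v i' * KK k (M i) (M i')) else 0)"
    unfolding BF_def by (intro sum.cong) (auto simp: ev_def)
  also have "\<dots> = (\<Sum>i<L. v i * KK k (M j) (M i))" using j by simp
  finally show ?thesis .
qed

lemma BF_ee: "j < L \<Longrightarrow> i < L \<Longrightarrow> BF (ev j) (ev i) = KK k (M j) (M i)"
proof -
  assume j: "j < L" and i: "i < L"
  have "BF (ev j) (ev i) = (\<Sum>i'<L. if i' = i then KK k (M j) (M i') else 0)"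
    unfolding BF_e_left[OF j] by (intro sum.cong) (auto simp: ev_def)
  also have "\<dots> = KK k (M j) (M i)" using i by simp
  finally show ?thesis .
qed

lemma QF_diff: "QF (\<lambda>i. u i - v i) = QF u - 2 * BF u v + QF v"
proof -
  have "QF (\<lambda>i. u i - v i) = QF (\<lambda>i. u i + (-1) * v i)" by simp
  also have "\<dots> = QF u - 2 * BF u v + QF v"
    unfolding QF_add BF_scale BF_scale2 by simp
  finally show ?thesis .
qed

lemma BF_diff2: "BF w (\<lambda>i. u i - v i) = BF w u - BF w v"
proof -
  have "BF w (\<lambda>i. u i - v i) = BF w (\<lambda>i. u i + (-1) * v i)" by simp
  also have "\<dots> = BF w u - BF w v" unfolding BF_add2 BF_scale2 by simp
  finally show ?thesis .
qed

lemma mmd_sq_QF: "a < L \<Longrightarrow> b < L \<Longrightarrow> mmd_sq k (M a) (M b) = QF (\<lambda>i. ev a i - ev b i)"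
  unfolding QF_diff by (simp add: BF_ee mmd_sq_def KK_def BF_sym[of "ev b" "ev a"])

lemma mmd_sq_nonneg: "a < L \<Longrightarrow> b < L \<Longrightarrow> mmd_sq k (M a) (M b) \<ge> 0"
  by (simp add: mmd_sq_QF QF_nonneg)

lemma QF_neg: "QF (\<lambda>i. u i - v i) = QF (\<lambda>i. v i - u i)"
  unfolding QF_diff using BF_sym[of u v] by simp

end

lemma sum_restrict:
  fixes f :: "nat \<Rightarrow> real"
  assumes "S \<subseteq> {..<L}"
  shows "(\<Sum>i<L. (if i \<in> S then c else 0) * f i) = c * (\<Sum>i\<in>S. f i)"
proof -
  have fS: "finite S" using assms finite_subset by blast
  have "(\<Sum>i<L. (if i \<in> S then c else 0) * f i) = (\<Sum>i<L. if i \<in> S then c * f i else 0)"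
    by (intro sum.cong) auto
  also have "\<dots> = (\<Sum>i\<in>{i\<in>{..<L}. i \<in> S}. c * f i)"
    by (rule sum.inter_filter[symmetric]) simp
  also have "{i\<in>{..<L}. i \<in> S} = S" using assms by auto
  finally show ?thesis by (simp add: sum_distrib_left)
qed

context setting
begin

abbreviation PI where "PI \<equiv> PiM {..<n} (\<lambda>_. PXM)"

definition "SS s = {i. i < n \<and> snd (s i)}" for s :: "nat \<Rightarrow> real \<times> bool"
definition "NN s = real (card (SS s))" for s :: "nat \<Rightarrow> real \<times> bool"
definition "gn x = (\<integral>y. k x y \<partial>nu)" for x
definition "cn = KK k nu nu"
definition "phi x y = k x y - gn x - gn y + cn" for x y
definition "W s = (\<Sum>a\<in>SS s. \<Sum>b\<in>SS s. phi (fst (s a)) (fst (s b))) / (NN s)\<^sup>2" for s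
definition "hh s = (if NN s = 0 then 1 else sqrt (W s))" for s

definition "Mf s i = (if i < n then return borel (fst (s i)) else if i = n then P (thetahat s)
   else if i = n+1 then mu else nu)" for s i

lemma SS_sub: "SS s \<subseteq> {..<n}" unfolding SS_def by auto
lemma SS_fin: "finite (SS s)" using SS_sub finite_subset by blast

lemma gn_meas[measurable]: "gn \<in> borel_measurable borel"
  unfolding gn_def using pb_nu by simp

lemma KK_ret_ret: "KK k (return borel x) (return borel y) = k x y"
  unfolding KK_def by (simp add: integral_return)

lemma KK_nu_ret: "KK k nu (return borel x) = gn x"
  unfolding KK_def gn_def
  by (simp add: integral_return) (rule Bochner_Integration.integral_cong[OF refl], rule sym)

lemma mmd_le2: "pb A \<Longrightarrow> pb B \<Longrightarrow> mmd k A B \<le> 2"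
proof -
  assume A: "pb A" and B: "pb B"
  have "mmd_sq k A B = KK k A A - 2 * KK k A B + KK k B B" unfolding mmd_sq_def KK_def ..
  also have "\<dots> \<le> 4" using KK_bnd[OF A A] KK_bnd[OF A B] KK_bnd[OF B B] by (simp add: abs_le_iff)
  finally have "mmd k A B \<le> sqrt 4" unfolding mmd_def by (rule real_sqrt_le_mono)
  then show ?thesis by simp
qed

lemma pointwise_pos:
  assumes s: "s \<in> space PI" and N: "NN s \<noteq> 0"
  shows "mmd k (P (thetahat s)) mu \<le> 2 * sqrt (W s) + 2 * TT" "W s \<ge> 0"
proof -
  have th: "thetahat s \<in> \<Theta>" and opt: "\<And>\<theta>. \<theta> \<in> \<Theta> \<Longrightarrow> mmd_objective k P n s (thetahat s) \<le> mmd_objective k P n s \<theta>"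
    using estimator[OF s] by auto
  interpret F: fam k "Mf s" "n+3"
  proof
    fix i assume "i < n + 3"
    then show "pb (Mf s i)" unfolding Mf_def using pb_return pb_P[OF th] pb_mu pb_nu by auto
  qed
  define S where "S = SS s"
  define N where "N = NN s"
  have fS: "finite S" and Ssub: "S \<subseteq> {..<n+3}" and Sn: "\<And>i. i \<in> S \<Longrightarrow> i < n"
    using SS_fin SS_sub unfolding S_def SS_def by auto
  have NS: "N = real (card S)" unfolding N_def NN_def S_def ..
  have N0: "N > 0" using N unfolding N_def NN_def by simp
  define p where "p i = (if i \<in> S then 1/N else 0)" for i
  have psum: "(\<Sum>i<n+3. p i * f i) = (\<Sum>i\<in>S. f i) / N" for f
    unfolding p_def using sum_restrict[OF Ssub] by simp
  have BFp: "F.BF (F.ev a) p = (\<Sum>i\<in>S. KK k (Mf s a) (Mf s i)) / N" if "a < n+3" for a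
    using F.BF_e_left[OF that] psum by simp
  have QFp: "F.QF p = (\<Sum>i\<in>S. \<Sum>j\<in>S. KK k (Mf s i) (Mf s j)) / N\<^sup>2"
  proof -
    have "F.QF p = (\<Sum>i<n+3. p i * (\<Sum>j<n+3. p j * KK k (Mf s i) (Mf s j)))"
      unfolding F.BF_def by (simp add: sum_distrib_left mult.assoc)
    also have "\<dots> = (\<Sum>i<n+3. p i * ((\<Sum>j\<in>S. KK k (Mf s i) (Mf s j)) / N))"
      by (simp add: psum)
    also have "\<dots> = (\<Sum>i\<in>S. (\<Sum>j\<in>S. KK k (Mf s i) (Mf s j)) / N) / N"
      by (rule psum)
    finally show ?thesis by (simp add: power2_eq_square sum_divide_distrib)
  qed
  have Mn: "Mf s n = P (thetahat s)" "Mf s (n+1) = mu" "Mf s (n+2) = nu" "Mf s (Suc n) = mu" "Mf s (Suc (Suc n)) = nu"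
    unfolding Mf_def by auto
  have Mi: "Mf s i = return borel (fst (s i))" if "i \<in> S" for i using Sn[OF that] unfolding Mf_def by simp
  have objrel: "(\<Sum>i\<in>S. mmd_sq k (Mf s a) (Mf s i)) = 
      N * F.QF (\<lambda>i. F.ev a i - p i) + (\<Sum>i\<in>S. KK k (Mf s i) (Mf s i)) - N * F.QF p" if a: "a < n+3" for a
  proof -
    have "(\<Sum>i\<in>S. mmd_sq k (Mf s a) (Mf s i)) = 
        (\<Sum>i\<in>S. KK k (Mf s a) (Mf s a) - 2 * KK k (Mf s a) (Mf s i) + KK k (Mf s i) (Mf s i))"
      by (simp add: mmd_sq_def KK_def)
    also have "\<dots> = N * KK k (Mf s a) (Mf s a) - 2 * (\<Sum>i\<in>S. KK k (Mf s a) (Mf s i)) + (\<Sum>i\<in>S. KK k (Mf s i) (Mf s i))"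
      by (simp add: sum.distrib sum_subtractf sum_distrib_left NS)
    also have "\<dots> = N * (KK k (Mf s a) (Mf s a) - 2 * ((\<Sum>i\<in>S. KK k (Mf s a) (Mf s i)) / N) + F.QF p) 
         + (\<Sum>i\<in>S. KK k (Mf s i) (Mf s i)) - N * F.QF p"
      using N0 by (simp add: field_simps)
    also have "KK k (Mf s a) (Mf s a) - 2 * ((\<Sum>i\<in>S. KK k (Mf s a) (Mf s i)) / N) + F.QF p = F.QF (\<lambda>i. F.ev a i - p i)"
      by (simp add: F.QF_diff F.BF_ee BFp a)
    finally show ?thesis .
  qed
  have objeq: "mmd_objective k P n s \<theta> = 1 / real n * (\<Sum>i\<in>S. mmd_sq k (Mf s a) (Mf s i))"
    if a: "a < n+3" and Pa: "P \<theta> = Mf s a" for a \<theta>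
  proof -
    have "{i. i < n \<and> snd (s i)} = S" unfolding S_def SS_def ..
    moreover have "(mmd k (P \<theta>) (return borel (fst (s i))))\<^sup>2 = mmd_sq k (Mf s a) (Mf s i)" if "i \<in> S" for i
      unfolding mmd_def Pa Mi[OF that, symmetric] using F.mmd_sq_nonneg[OF a, of i] Sn[OF that] by simp
    ultimately show ?thesis unfolding mmd_objective_def by simp
  qed
  have "mmd_objective k P n s (thetahat s) \<le> mmd_objective k P n s \<theta>star" by (rule opt[OF theta_star])
  then have "(\<Sum>i\<in>S. mmd_sq k (Mf s n) (Mf s i)) \<le> (\<Sum>i\<in>S. mmd_sq k (Mf s (n+1)) (Mf s i))"
    using objeq[of n "thetahat s"] objeq[of "n+1" \<theta>star] Mn n_pos by (simp add: divide_le_cancel)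
  then have "N * F.QF (\<lambda>i. F.ev n i - p i) \<le> N * F.QF (\<lambda>i. F.ev (n+1) i - p i)"
    using objrel[of n] objrel[of "n+1"] by simp
  then have le1: "sqrt (F.QF (\<lambda>i. F.ev n i - p i)) \<le> sqrt (F.QF (\<lambda>i. p i - F.ev (n+1) i))"
    using N0 F.QF_neg[of p "F.ev (n+1)"] by simp
  have t1: "sqrt (F.QF (\<lambda>i. F.ev n i - F.ev (n+1) i)) \<le> sqrt (F.QF (\<lambda>i. F.ev n i - p i)) + sqrt (F.QF (\<lambda>i. p i - F.ev (n+1) i))"
    using F.tri[of "\<lambda>i. F.ev n i - p i" "\<lambda>i. p i - F.ev (n+1) i"] by simp
  have t2: "sqrt (F.QF (\<lambda>i. p i - F.ev (n+1) i)) \<le> sqrt (F.QF (\<lambda>i. p i - F.ev (n+2) i)) + sqrt (F.QF (\<lambda>i. F.ev (n+2) i - F.ev (n+1) i))"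
    using F.tri[of "\<lambda>i. p i - F.ev (n+2) i" "\<lambda>i. F.ev (n+2) i - F.ev (n+1) i"] by simp
  have e1: "mmd k (P (thetahat s)) mu = sqrt (F.QF (\<lambda>i. F.ev n i - F.ev (n+1) i))"
    unfolding mmd_def using F.mmd_sq_QF[of n "n+1"] Mn by simp
  have e2: "sqrt (F.QF (\<lambda>i. F.ev (n+2) i - F.ev (n+1) i)) = mmd k nu mu"
    unfolding mmd_def using F.mmd_sq_QF[of "n+2" "n+1"] Mn by simp
  define x where "x i = fst (s i)" for i
  have Wform: "F.QF (\<lambda>i. p i - F.ev (n+2) i) = W s"
  proof -
    have a1: "F.QF p = (\<Sum>i\<in>S. \<Sum>j\<in>S. k (x i) (x j)) / N\<^sup>2"
      unfolding QFp by (simp add: Mi KK_ret_ret x_def)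
    have a2: "F.BF p (F.ev (n+2)) = (\<Sum>i\<in>S. gn (x i)) / N"
      using F.BF_sym[of p "F.ev (n+2)"] BFp[of "n+2"] by (simp add: Mi Mn KK_nu_ret x_def)
    have a3: "F.QF (F.ev (n+2)) = cn" using F.BF_ee[of "n+2" "n+2"] Mn by (simp add: cn_def)
    have "(\<Sum>a\<in>S. \<Sum>b\<in>S. phi (x a) (x b)) = 
        (\<Sum>a\<in>S. (\<Sum>b\<in>S. k (x a) (x b)) - N * gn (x a) - (\<Sum>b\<in>S. gn (x b)) + N * cn)"
      by (intro sum.cong) (simp_all add: phi_def sum.distrib sum_subtractf NS)
    also have "\<dots> = (\<Sum>a\<in>S. \<Sum>b\<in>S. k (x a) (x b)) - 2 * N * (\<Sum>a\<in>S. gn (x a)) + N * N * cn"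
      by (simp add: sum.distrib sum_subtractf sum_distrib_left[symmetric] NS)
    finally have "W s = ((\<Sum>a\<in>S. \<Sum>b\<in>S. k (x a) (x b)) - 2 * N * (\<Sum>a\<in>S. gn (x a)) + N * N * cn) / N\<^sup>2"
      unfolding W_def S_def[symmetric] N_def[symmetric] x_def by simp
    also have "\<dots> = F.QF p - 2 * F.BF p (F.ev (n+2)) + F.QF (F.ev (n+2))"
      unfolding a1 a2 a3 using N0 by (simp add: field_simps power2_eq_square)
    finally show ?thesis unfolding F.QF_diff by simp
  qed
  show "W s \<ge> 0" using F.QF_nonneg Wform by metis
  have "mmd k (P (thetahat s)) mu \<le> 2 * sqrt (F.QF (\<lambda>i. p i - F.ev (n+1) i))"
    using e1 t1 le1 by linarith
  also have "\<dots> \<le> 2 * (sqrt (W s) + mmd k nu mu)" using t2 e2 Wform by simp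
  also have "\<dots> \<le> 2 * sqrt (W s) + 2 * TT" using mmd_nu_mu by simp
  finally show "mmd k (P (thetahat s)) mu \<le> 2 * sqrt (W s) + 2 * TT" .
qed

lemma pointwise:
  assumes s: "s \<in> space PI"
  shows "mmd k (P (thetahat s)) mu \<le> 2 * hh s + 2 * TT"
proof (cases "NN s = 0")
  case True
  have "mmd k (P (thetahat s)) mu \<le> 2" using mmd_le2 pb_P estimator[OF s] pb_mu by simp
  then show ?thesis using True TT_nonneg by (simp add: hh_def)
next
  case False
  then show ?thesis using pointwise_pos[OF s False] by (simp add: hh_def)
qed

end




context setting
begin

lemma PI_prob: "prob_space PI" using PXM(1) by (intro prob_space_PiM) auto

lemma comp_meas: "a < n \<Longrightarrow> (\<lambda>s. s a) \<in> measurable PI PXM"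
  by (rule measurable_component_singleton) simp

lemma X_meas: "a < n \<Longrightarrow> (\<lambda>s. fst (s a)) \<in> borel_measurable PI"
  using measurable_comp[OF comp_meas PXM_fst] by (simp add: comp_def)

lemma O_meas: "a < n \<Longrightarrow> (\<lambda>s. snd (s a)) \<in> measurable PI (count_space UNIV)"
  using measurable_comp[OF comp_meas PXM_snd] by (simp add: comp_def)

lemma O_pred: "a < n \<Longrightarrow> Measurable.pred PI (\<lambda>s. snd (s a))"
  using O_meas[of a] by (simp add: pred_def measurable_count_space_eq2 )

lemma obs_int:
  fixes H :: "real \<Rightarrow> (nat \<Rightarrow> real \<times> bool) \<Rightarrow> real"
  assumes a: "a < n" and Hm: "(\<lambda>(x,s). H x s) \<in> borel_measurable (borel \<Otimes>\<^sub>M PI)"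
    and HB: "\<And>x s. \<bar>H x s\<bar> \<le> B"
    and Hu: "\<And>x s z. s \<in> space PI \<Longrightarrow> H x (s(a:=z)) = H x s"
  shows "(\<integral>s. (if snd (s a) then H (fst (s a)) s else 0) \<partial>PI) = p0 * (\<integral>s. (\<integral>x. H x s \<partial>nu) \<partial>PI)"
proof -
  define F where "F s = (if snd (s a) then H (fst (s a)) s else 0)" for s
  have pm: "(\<lambda>s. (fst (s a), s)) \<in> measurable PI (borel \<Otimes>\<^sub>M PI)"
    using X_meas[OF a] by (intro measurable_Pair) auto
  have Fm: "F \<in> borel_measurable PI"
    unfolding F_def using measurable_comp[OF pm Hm] O_pred[OF a]
    by (intro measurable_If) (simp_all add: comp_def)
  have B0: "0 \<le> B" by (rule order_trans[OF abs_ge_zero HB])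
  have FB: "\<bar>F s\<bar> \<le> B" for s unfolding F_def using HB B0 by auto
  have Hx: "(\<lambda>x. H x s) \<in> borel_measurable borel" if "s \<in> space PI" for s
  proof -
    have "(\<lambda>x. (x, s)) \<in> measurable borel (borel \<Otimes>\<^sub>M PI)" using that by (intro measurable_Pair) auto
    from measurable_comp[OF this Hm] show ?thesis by (simp add: comp_def)
  qed
  have "(\<integral>s. F s \<partial>PI) = (\<integral>s. (\<integral>y. F (s(a:=y)) \<partial>PXM) \<partial>PI)"
    using PXM(1) a Fm FB by (intro integrate_out[where B=B]) simp_all
  also have "\<dots> = (\<integral>s. p0 * (\<integral>x. H x s \<partial>nu) \<partial>PI)"
  proof (intro Bochner_Integration.integral_cong refl)
    fix s assume s: "s \<in> space PI"
    have "(\<integral>y. F (s(a:=y)) \<partial>PXM) = (\<integral>y. (if snd y then H (fst y) s else 0) \<partial>PXM)"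
      unfolding F_def by (intro Bochner_Integration.integral_cong refl) (simp add: Hu[OF s])
    also have "\<dots> = p0 * (\<integral>x. H x s \<partial>nu)" by (rule PXM_obs_nu[OF Hx[OF s]])
    finally show "(\<integral>y. F (s(a:=y)) \<partial>PXM) = p0 * (\<integral>x. H x s \<partial>nu)" .
  qed
  also have "\<dots> = p0 * (\<integral>s. (\<integral>x. H x s \<partial>nu) \<partial>PI)" by simp
  finally show ?thesis unfolding F_def .
qed

definition "ind s a = (if snd (s a) then 1 else 0 :: real)" for s :: "nat \<Rightarrow> real \<times> bool" and a

lemma ind_meas: "a < n \<Longrightarrow> (\<lambda>s. ind s a) \<in> borel_measurable PI"
  unfolding ind_def using O_pred by (intro measurable_If) auto

lemma NN_sum: "NN s = (\<Sum>i<n. ind s i)"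
proof -
  have "(\<Sum>i<n. ind s i) = (\<Sum>i\<in>{i\<in>{..<n}. snd (s i)}. 1)"
    unfolding ind_def by (subst sum.inter_filter) auto
  also have "{i\<in>{..<n}. snd (s i)} = SS s" unfolding SS_def by auto
  finally show ?thesis unfolding NN_def by simp
qed

definition "Nm a s = (\<Sum>i\<in>{..<n}-{a}. ind s i)" for a s

lemma NN_split: "a < n \<Longrightarrow> NN s = Nm a s + ind s a"
  unfolding NN_sum Nm_def by (subst sum.remove[of _ a]) auto

lemma Nm_upd: "Nm a (s(a:=z)) = Nm a s"
  unfolding Nm_def ind_def by (intro sum.cong) auto

lemma ind01: "0 \<le> ind s a" "ind s a \<le> 1" unfolding ind_def by auto

lemma Nm_nonneg: "0 \<le> Nm a s" unfolding Nm_def using ind01 by (simp add: sum_nonneg)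
lemma NN_nonneg: "0 \<le> NN s" unfolding NN_def by simp

lemma NN_ge1: "NN s \<noteq> 0 \<Longrightarrow> NN s \<ge> 1" unfolding NN_def by simp

lemma NN_meas: "NN \<in> borel_measurable PI"
proof -
  have "(\<lambda>s. \<Sum>i<n. ind s i) \<in> borel_measurable PI" using ind_meas by (intro borel_measurable_sum) auto
  then show ?thesis by (simp add: NN_sum[abs_def])
qed

lemma Nm_meas: "Nm a \<in> borel_measurable PI"
  unfolding Nm_def[abs_def] using ind_meas by (intro borel_measurable_sum) auto

lemma int_PI: fixes f :: "(nat \<Rightarrow> real \<times> bool) \<Rightarrow> real" shows "f \<in> borel_measurable PI \<Longrightarrow> (\<And>s. \<bar>f s\<bar> \<le> B) \<Longrightarrow> integrable PI f"
  by (rule integrable_bnd[OF PI_prob]) auto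

lemma inv_bound: "real n * p0 * (\<integral>s. 1 / (NN s + 1) \<partial>PI) \<le> 1"
proof -
  interpret PIp: prob_space PI by (rule PI_prob)
  have m1: "(\<lambda>s. 1 / (NN s + 1)) \<in> borel_measurable PI" using NN_meas by measurable
  have b1: "\<bar>1 / (NN s + 1)\<bar> \<le> 1" for s using NN_nonneg[of s] by simp
  have m2: "(\<lambda>s. 1 / (Nm a s + 1)) \<in> borel_measurable PI" for a using Nm_meas by measurable
  have b2: "\<bar>1 / (Nm a s + 1)\<bar> \<le> 1" for a s using Nm_nonneg[of a s] by simp
  define E where "E a = (\<integral>s. ind s a / NN s \<partial>PI)" for a
  have mE: "(\<lambda>s. ind s a / NN s) \<in> borel_measurable PI" if "a < n" for a
    using ind_meas[OF that] NN_meas by measurable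
  have bE: "\<bar>ind s a / NN s\<bar> \<le> 1" for a s
  proof (cases "NN s = 0")
    case False
    have "ind s a \<le> NN s"
      using ind01[of s a] NN_ge1[OF False] by simp
    then show ?thesis using ind01[of s a] NN_nonneg[of s] False by (simp add: abs_le_iff divide_le_eq_1)
  qed simp
  have Ea: "p0 * (\<integral>s. 1 / (NN s + 1) \<partial>PI) \<le> E a" if a: "a < n" for a
  proof -
    have "E a = (\<integral>s. (if snd (s a) then 1 / (Nm a s + 1) else 0) \<partial>PI)"
      unfolding E_def using NN_split[OF a] by (intro Bochner_Integration.integral_cong refl) (simp add: ind_def)
    also have "\<dots> = p0 * (\<integral>s. (\<integral>x. 1 / (Nm a s + 1) \<partial>nu) \<partial>PI)"
    proof (rule obs_int[OF a, where B=1])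
      show "(\<lambda>(x, s). 1 / (Nm a s + 1)) \<in> borel_measurable (borel \<Otimes>\<^sub>M PI)"
        using measurable_comp[OF measurable_snd m2] by (simp add: comp_def case_prod_beta')
    next
      fix x :: real and s show "\<bar>1 / (Nm a s + 1)\<bar> \<le> 1" by (rule b2)
    next
      fix x :: real and s z show "1 / (Nm a (s(a:=z)) + 1) = 1 / (Nm a s + 1)" by (simp add: Nm_upd)
    qed
    also have "\<dots> = p0 * (\<integral>s. 1 / (Nm a s + 1) \<partial>PI)"
      using pb_nu by (simp add: pb_def prob_space.prob_space)
    finally have "E a = p0 * (\<integral>s. 1 / (Nm a s + 1) \<partial>PI)" .
    moreover have "(\<integral>s. 1 / (NN s + 1) \<partial>PI) \<le> (\<integral>s. 1 / (Nm a s + 1) \<partial>PI)"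
    proof (rule integral_mono)
      show "integrable PI (\<lambda>s. 1 / (NN s + 1))" using m1 b1 by (rule int_PI)
      show "integrable PI (\<lambda>s. 1 / (Nm a s + 1))" using m2 b2 by (rule int_PI)
      fix s show "1 / (NN s + 1) \<le> 1 / (Nm a s + 1)"
        using NN_split[OF a, of s] Nm_nonneg[of a s] ind01[of s a] by (simp add: frac_le)
    qed
    ultimately show ?thesis using p0_pos by simp
  qed
  have "real n * p0 * (\<integral>s. 1 / (NN s + 1) \<partial>PI) = (\<Sum>a<n. p0 * (\<integral>s. 1 / (NN s + 1) \<partial>PI))" by simp
  also have "\<dots> \<le> (\<Sum>a<n. E a)" using Ea by (intro sum_mono) auto
  also have "\<dots> = (\<integral>s. (\<Sum>a<n. ind s a / NN s) \<partial>PI)"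
    unfolding E_def
    by (subst Bochner_Integration.integral_sum) (rule int_PI[where B=1], use mE bE in auto)
  also have "\<dots> \<le> (\<integral>s. 1 \<partial>PI)"
  proof (rule integral_mono)
    show "integrable PI (\<lambda>s. \<Sum>a<n. ind s a / NN s)"
      by (rule Bochner_Integration.integrable_sum, rule int_PI[where B=1]) (use mE bE in auto)
    fix s
    have "(\<Sum>a<n. ind s a / NN s) = NN s / NN s" unfolding NN_sum by (rule sum_divide_distrib[symmetric])
    also have "\<dots> \<le> 1" by (cases "NN s = 0") auto
    finally show "(\<Sum>a<n. ind s a / NN s) \<le> 1" .
  qed simp
  also have "\<dots> = 1" by (simp add: PIp.prob_space)
  finally show ?thesis .
qed

lemma phi_meas: "(\<lambda>(x, y). phi x y) \<in> borel_measurable (borel \<Otimes>\<^sub>M borel)"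
  unfolding phi_def by measurable

lemma gn_bnd: "\<bar>gn x\<bar> \<le> 1" unfolding gn_def using inner_bnd pb_nu by simp
lemma cn_bnd: "\<bar>cn\<bar> \<le> 1" unfolding cn_def using KK_bnd pb_nu by simp

lemma phi_bnd: "\<bar>phi x y\<bar> \<le> 4"
  using bnd[of x y] gn_bnd[of x] gn_bnd[of y] cn_bnd unfolding phi_def by (simp add: abs_le_iff)

lemma phi_comp: "f \<in> borel_measurable M \<Longrightarrow> g \<in> borel_measurable M \<Longrightarrow> (\<lambda>s. phi (f s) (g s)) \<in> borel_measurable M"
  using measurable_comp[OF measurable_Pair phi_meas, of f M g] by (simp add: comp_def)

lemma nu_integrable: fixes f :: "real \<Rightarrow> real" shows "f \<in> borel_measurable borel \<Longrightarrow> (\<And>x. \<bar>f x\<bar> \<le> B) \<Longrightarrow> integrable nu f"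
  using pb_nu by (intro integrable_bnd[where B=B]) (auto simp: pb_def pb_meas)

lemma phi_int_zero: "(\<integral>x. phi x y \<partial>nu) = 0"
proof -
  have kk: "(\<integral>x. k x y \<partial>nu) = gn y" unfolding gn_def
    by (rule Bochner_Integration.integral_cong[OF refl], rule sym)
  have cg: "(\<integral>x. gn x \<partial>nu) = cn" unfolding cn_def KK_def gn_def ..
  have i1: "integrable nu (\<lambda>x. k x y)" by (rule nu_integrable[where B=1]) (auto simp: bnd)
  have i2: "integrable nu gn" by (rule nu_integrable[where B=1]) (auto simp: gn_bnd)
  have P1: "prob_space nu" using pb_nu by (simp add: pb_def)
  have "(\<integral>x. phi x y \<partial>nu) = (\<integral>x. (k x y - gn x) + (cn - gn y) \<partial>nu)"
    by (simp add: phi_def algebra_simps)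
  also have "\<dots> = (\<integral>x. k x y - gn x \<partial>nu) + (cn - gn y)"
    using i1 i2 prob_space.prob_space[OF P1] finite_measure.integrable_const[OF prob_space.finite_measure[OF P1]]
    by (subst Bochner_Integration.integral_add) auto
  also have "(\<integral>x. k x y - gn x \<partial>nu) = (\<integral>x. k x y \<partial>nu) - (\<integral>x. gn x \<partial>nu)"
    by (rule Bochner_Integration.integral_diff[OF i1 i2])
  finally show ?thesis using kk cg by simp
qed

definition "Ed = (\<integral>x. phi x x \<partial>nu)"

lemma cn_nonneg: "0 \<le> cn"
  using psd[of 1 "\<lambda>_. nu" "\<lambda>_. 1"] pb_nu by (simp add: cn_def)

lemma Ed_le: "Ed \<le> 1"
proof -
  have cg: "(\<integral>x. gn x \<partial>nu) = cn" unfolding cn_def KK_def gn_def ..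
  have i1: "integrable nu (\<lambda>x. k x x)" by (rule nu_integrable[where B=1]) (auto simp: bnd)
  have i2: "integrable nu gn" by (rule nu_integrable[where B=1]) (auto simp: gn_bnd)
  have P1: "prob_space nu" using pb_nu by (simp add: pb_def)
  have "Ed = (\<integral>x. (k x x - 2 * gn x) + cn \<partial>nu)"
    unfolding Ed_def by (simp add: phi_def algebra_simps)
  also have "\<dots> = (\<integral>x. k x x - 2 * gn x \<partial>nu) + cn"
    using i1 i2 prob_space.prob_space[OF P1] finite_measure.integrable_const[OF prob_space.finite_measure[OF P1]]
    by (subst Bochner_Integration.integral_add) auto
  also have "(\<integral>x. k x x - 2 * gn x \<partial>nu) = (\<integral>x. k x x \<partial>nu) - (\<integral>x. 2 * gn x \<partial>nu)"
    using i2 by (intro Bochner_Integration.integral_diff[OF i1]) auto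
  finally have "Ed = (\<integral>x. k x x \<partial>nu) - cn" using cg by simp
  moreover have "(\<integral>x. k x x \<partial>nu) \<le> 1"
    using abs_int_le[OF P1, of "\<lambda>x. k x x" 1] bnd pb_nu by (simp add: pb_meas abs_le_iff)
  ultimately show ?thesis using cn_nonneg by simp
qed

definition "Tm a b s = (if snd (s a) \<and> snd (s b) then phi (fst (s a)) (fst (s b)) else 0) / (NN s)\<^sup>2"
  for a b s

lemma SS_sum: "(\<Sum>a\<in>SS s. f a) = (\<Sum>a<n. if snd (s a) then f a else (0::real))"
proof -
  have "{a\<in>{..<n}. snd (s a)} = SS s" unfolding SS_def by auto
  then show ?thesis using sum.inter_filter[of "{..<n}" f "\<lambda>a. snd (s a)"] by simp
qed

lemma W_sum: "W s = (\<Sum>a<n. \<Sum>b<n. Tm a b s)"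
proof -
  have "(\<Sum>a\<in>SS s. \<Sum>b\<in>SS s. phi (fst (s a)) (fst (s b))) = 
      (\<Sum>a<n. \<Sum>b<n. (if snd (s a) \<and> snd (s b) then phi (fst (s a)) (fst (s b)) else 0))"
    unfolding SS_sum by (intro sum.cong refl) (auto simp: SS_sum)
  then show ?thesis unfolding W_def Tm_def by (simp add: sum_divide_distrib)
qed

lemma snd_comp: "f \<in> measurable PI N \<Longrightarrow> (\<lambda>p. f (snd p)) \<in> measurable (borel \<Otimes>\<^sub>M PI) N"
  using measurable_comp[OF measurable_snd, of f PI N borel] by (simp add: comp_def)

lemma O_pred2: "b < n \<Longrightarrow> Measurable.pred (borel \<Otimes>\<^sub>M PI) (\<lambda>p. snd (snd p b))"
  using snd_comp[OF O_meas[of b]] by (simp add: pred_def measurable_count_space_eq2)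

lemma NN_ge1': "NN s \<noteq> 0 \<Longrightarrow> 1 \<le> (NN s)\<^sup>2"
  using NN_ge1[of s] by (simp add: one_le_power)

lemma Tm_bnd: "\<bar>Tm a b s\<bar> \<le> 4"
proof (cases "NN s = 0")
  case False
  have "\<bar>Tm a b s\<bar> = \<bar>if snd (s a) \<and> snd (s b) then phi (fst (s a)) (fst (s b)) else 0\<bar> / (NN s)\<^sup>2"
    unfolding Tm_def by (simp add: abs_divide)
  also have "\<dots> \<le> \<bar>if snd (s a) \<and> snd (s b) then phi (fst (s a)) (fst (s b)) else 0\<bar>"
    using False NN_ge1'[OF False] divide_left_mono[of 1 "(NN s)\<^sup>2" "\<bar>if snd (s a) \<and> snd (s b) then phi (fst (s a)) (fst (s b)) else 0\<bar>"]
    by simp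
  also have "\<dots> \<le> 4" using phi_bnd by auto
  finally show ?thesis .
qed (simp add: Tm_def)

lemma Tm_meas: "a < n \<Longrightarrow> b < n \<Longrightarrow> Tm a b \<in> borel_measurable PI"
  unfolding Tm_def[abs_def] using O_pred X_meas NN_meas
  by (intro borel_measurable_divide measurable_If phi_comp borel_measurable_power) auto

lemma Nm_comp: "(\<lambda>p. Nm a (snd p)) \<in> borel_measurable (borel \<Otimes>\<^sub>M PI)"
  using snd_comp[OF Nm_meas] .

lemma X_comp: "b < n \<Longrightarrow> (\<lambda>p. fst (snd p b)) \<in> borel_measurable (borel \<Otimes>\<^sub>M PI)"
  using snd_comp[OF X_meas] .

lemma inv_sq_bnd: "\<bar>y / (Nm a s + 1)\<^sup>2\<bar> \<le> \<bar>y\<bar>"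
proof -
  have "1 \<le> (Nm a s + 1)\<^sup>2" using Nm_nonneg[of a s] by (simp add: one_le_power)
  then show ?thesis using divide_left_mono[of 1 "(Nm a s + 1)\<^sup>2" "\<bar>y\<bar>"] Nm_nonneg[of a s] by (simp add: abs_divide)
qed

lemma int_ind_sq: "a < n \<Longrightarrow> (\<integral>s. ind s a / (NN s)\<^sup>2 \<partial>PI) = p0 * (\<integral>s. 1 / (Nm a s + 1)\<^sup>2 \<partial>PI)"
proof -
  assume a: "a < n"
  have "(\<integral>s. ind s a / (NN s)\<^sup>2 \<partial>PI) = (\<integral>s. (if snd (s a) then 1 / (Nm a s + 1)\<^sup>2 else 0) \<partial>PI)"
    using NN_split[OF a] by (intro Bochner_Integration.integral_cong refl) (simp add: ind_def)
  also have "\<dots> = p0 * (\<integral>s. (\<integral>x. 1 / (Nm a s + 1)\<^sup>2 \<partial>nu) \<partial>PI)"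
  proof (rule obs_int[OF a, where B=1])
    show "(\<lambda>(x, s). 1 / (Nm a s + 1)\<^sup>2) \<in> borel_measurable (borel \<Otimes>\<^sub>M PI)"
      unfolding case_prod_beta' using Nm_comp[of a]
      by (intro borel_measurable_divide borel_measurable_power borel_measurable_add) auto
  next
    fix x :: real and s show "\<bar>1 / (Nm a s + 1)\<^sup>2\<bar> \<le> 1" using inv_sq_bnd[of 1 a s] by simp
  next
    fix x :: real and s z show "1 / (Nm a (s(a:=z)) + 1)\<^sup>2 = 1 / (Nm a s + 1)\<^sup>2" by (simp add: Nm_upd)
  qed
  also have "\<dots> = p0 * (\<integral>s. 1 / (Nm a s + 1)\<^sup>2 \<partial>PI)"
    using pb_nu by (simp add: pb_def prob_space.prob_space)
  finally show ?thesis .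
qed

lemma Tm_off: "a < n \<Longrightarrow> b < n \<Longrightarrow> a \<noteq> b \<Longrightarrow> (\<integral>s. Tm a b s \<partial>PI) = 0"
proof -
  assume a: "a < n" and b: "b < n" and ab: "a \<noteq> b"
  define H where "H x s = (if snd (s b) then phi x (fst (s b)) else 0) / (Nm a s + 1)\<^sup>2" for x s
  have "(\<integral>s. Tm a b s \<partial>PI) = (\<integral>s. (if snd (s a) then H (fst (s a)) s else 0) \<partial>PI)"
    using NN_split[OF a] by (intro Bochner_Integration.integral_cong refl) (simp add: ind_def Tm_def H_def)
  also have "\<dots> = p0 * (\<integral>s. (\<integral>x. H x s \<partial>nu) \<partial>PI)"
  proof (rule obs_int[OF a, where B=4])
    have "(\<lambda>p. phi (fst p) (fst (snd p b))) \<in> borel_measurable (borel \<Otimes>\<^sub>M PI)"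
      using X_comp[OF b] by (intro phi_comp) auto
    then show "(\<lambda>(x, s). H x s) \<in> borel_measurable (borel \<Otimes>\<^sub>M PI)"
      unfolding H_def case_prod_beta' using O_pred2[OF b] Nm_comp[of a]
      by (intro borel_measurable_divide measurable_If borel_measurable_power borel_measurable_add) (auto simp: pred_def)
  next
    fix x :: real and s show "\<bar>H x s\<bar> \<le> 4" 
      unfolding H_def using order_trans[OF inv_sq_bnd] phi_bnd by auto
  next
    fix x :: real and s z show "H x (s(a:=z)) = H x s" unfolding H_def using ab by (simp add: Nm_upd)
  qed
  also have "\<dots> = 0"
  proof -
    have "(\<integral>x. H x s \<partial>nu) = 0" for s
      unfolding H_def using phi_int_zero by (cases "snd (s b)") simp_all
    then show ?thesis by simp
  qed
  finally show ?thesis .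
qed

lemma Tm_diag: "a < n \<Longrightarrow> (\<integral>s. Tm a a s \<partial>PI) = Ed * (\<integral>s. ind s a / (NN s)\<^sup>2 \<partial>PI)"
proof -
  assume a: "a < n"
  define H where "H x s = phi x x / (Nm a s + 1)\<^sup>2" for x s
  have "(\<integral>s. Tm a a s \<partial>PI) = (\<integral>s. (if snd (s a) then H (fst (s a)) s else 0) \<partial>PI)"
    using NN_split[OF a] by (intro Bochner_Integration.integral_cong refl) (simp add: ind_def Tm_def H_def)
  also have "\<dots> = p0 * (\<integral>s. (\<integral>x. H x s \<partial>nu) \<partial>PI)"
  proof (rule obs_int[OF a, where B=4])
    have "(\<lambda>p. phi (fst p) (fst p)) \<in> borel_measurable (borel \<Otimes>\<^sub>M PI)"
      by (intro phi_comp) auto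
    then show "(\<lambda>(x, s). H x s) \<in> borel_measurable (borel \<Otimes>\<^sub>M PI)"
      unfolding H_def case_prod_beta' using Nm_comp[of a]
      by (intro borel_measurable_divide borel_measurable_power borel_measurable_add) auto
  next
    fix x :: real and s show "\<bar>H x s\<bar> \<le> 4" 
      unfolding H_def using order_trans[OF inv_sq_bnd] phi_bnd by auto
  next
    fix x :: real and s z show "H x (s(a:=z)) = H x s" unfolding H_def by (simp add: Nm_upd)
  qed
  also have "\<dots> = p0 * (\<integral>s. Ed * (1 / (Nm a s + 1)\<^sup>2) \<partial>PI)"
    unfolding H_def Ed_def by simp
  also have "\<dots> = Ed * (\<integral>s. ind s a / (NN s)\<^sup>2 \<partial>PI)"
    unfolding int_ind_sq[OF a] by (subst integral_mult_right_zero) simp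
  finally show ?thesis .
qed

lemma ind_sq_meas: "a < n \<Longrightarrow> (\<lambda>s. ind s a / (NN s)\<^sup>2) \<in> borel_measurable PI"
  using ind_meas NN_meas by (intro borel_measurable_divide borel_measurable_power) auto

lemma ind_sq_bnd: "\<bar>ind s a / (NN s)\<^sup>2\<bar> \<le> 1"
proof (cases "NN s = 0")
  case False
  then show ?thesis using NN_ge1'[OF False] ind01[of s a] by (simp add: abs_divide divide_le_eq_1)
qed simp

lemma invNN_meas: "(\<lambda>s. 1 / NN s) \<in> borel_measurable PI"
  using NN_meas by (intro borel_measurable_divide) auto

lemma invNN_bnd: "\<bar>1 / NN s\<bar> \<le> 1"
proof (cases "NN s = 0")
  case False then show ?thesis using NN_ge1[OF False] by simp
qed simp

lemma EW_le: "(\<integral>s. W s \<partial>PI) \<le> (\<integral>s. 1 / NN s \<partial>PI)"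
proof -
  have iT: "integrable PI (Tm a b)" if "a < n" "b < n" for a b
    using Tm_meas[OF that] Tm_bnd by (intro int_PI[where B=4]) auto
  have "(\<integral>s. W s \<partial>PI) = (\<Sum>a<n. \<Sum>b<n. (\<integral>s. Tm a b s \<partial>PI))"
    unfolding W_sum
    by (subst Bochner_Integration.integral_sum, rule Bochner_Integration.integrable_sum, (use iT in simp),
        rule sum.cong[OF refl], subst Bochner_Integration.integral_sum) (use iT in simp_all)
  also have "\<dots> = (\<Sum>a<n. (\<integral>s. Tm a a s \<partial>PI))"
  proof (rule sum.cong[OF refl])
    fix a assume a: "a \<in> {..<n}"
    have "(\<Sum>b<n. (\<integral>s. Tm a b s \<partial>PI)) = (\<Sum>b<n. if b = a then (\<integral>s. Tm a a s \<partial>PI) else 0)"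
      using a Tm_off by (intro sum.cong) auto
    also have "\<dots> = (\<integral>s. Tm a a s \<partial>PI)" using a by simp
    finally show "(\<Sum>b<n. (\<integral>s. Tm a b s \<partial>PI)) = (\<integral>s. Tm a a s \<partial>PI)" .
  qed
  also have "\<dots> = Ed * (\<Sum>a<n. (\<integral>s. ind s a / (NN s)\<^sup>2 \<partial>PI))"
    by (simp add: Tm_diag sum_distrib_left)
  also have "(\<Sum>a<n. (\<integral>s. ind s a / (NN s)\<^sup>2 \<partial>PI)) = (\<integral>s. (\<Sum>a<n. ind s a / (NN s)\<^sup>2) \<partial>PI)"
    by (subst Bochner_Integration.integral_sum) (auto intro!: int_PI[where B=1] ind_sq_meas ind_sq_bnd)
  also have "\<dots> = (\<integral>s. 1 / NN s \<partial>PI)"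
  proof (intro Bochner_Integration.integral_cong refl)
    fix s
    have "(\<Sum>a<n. ind s a / (NN s)\<^sup>2) = NN s / (NN s)\<^sup>2"
      unfolding NN_sum[of s] by (rule sum_divide_distrib[symmetric])
    also have "\<dots> = 1 / NN s" by (cases "NN s = 0") (auto simp: power2_eq_square)
    finally show "(\<Sum>a<n. ind s a / (NN s)\<^sup>2) = 1 / NN s" .
  qed
  also have "Ed * (\<integral>s. 1 / NN s \<partial>PI) \<le> (\<integral>s. 1 / NN s \<partial>PI)"
  proof -
    have "0 \<le> (\<integral>s. 1 / NN s \<partial>PI)" using NN_nonneg by (intro integral_nonneg_AE) auto
    then show ?thesis using Ed_le mult_right_mono[of Ed 1] by simp
  qed
  finally show ?thesis .
qed

lemma W_meas: "W \<in> borel_measurable PI"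
proof -
  have "(\<lambda>s. \<Sum>a<n. \<Sum>b<n. Tm a b s) \<in> borel_measurable PI"
    using Tm_meas by (intro borel_measurable_sum) auto
  then show ?thesis by (simp add: W_sum[abs_def])
qed

lemma W_bnd: "\<bar>W s\<bar> \<le> 4 * (real n)\<^sup>2"
proof -
  have "\<bar>W s\<bar> \<le> (\<Sum>a<n. \<Sum>b<n. \<bar>Tm a b s\<bar>)"
    unfolding W_sum by (rule order_trans[OF sum_abs sum_mono[OF sum_abs]])
  also have "\<dots> \<le> (\<Sum>a<n. \<Sum>b<n. 4)" by (intro sum_mono Tm_bnd)
  finally show ?thesis by (simp add: power2_eq_square)
qed

lemma hh_meas: "hh \<in> borel_measurable PI"
  unfolding hh_def[abs_def] using NN_meas W_meas
  by (intro measurable_If borel_measurable_sqrt) (auto simp: pred_def)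

lemma hh_bnd: "\<bar>hh s\<bar> \<le> 1 + 2 * real n"
proof -
  have "\<bar>sqrt (W s)\<bar> = sqrt \<bar>W s\<bar>"
    by (cases "W s \<ge> 0") (simp_all add: real_sqrt_minus[symmetric] abs_if)
  also have "\<dots> \<le> sqrt (4 * (real n)\<^sup>2)" using W_bnd by (rule real_sqrt_le_mono)
  also have "\<dots> = 2 * real n" by (simp add: real_sqrt_mult)
  finally show ?thesis unfolding hh_def by auto
qed

lemma hh_sq: "s \<in> space PI \<Longrightarrow> (hh s)\<^sup>2 = (if NN s = 0 then 1 else 0) + W s"
proof -
  assume s: "s \<in> space PI"
  show ?thesis
  proof (cases "NN s = 0")
    case True then show ?thesis by (simp add: hh_def W_def)
  next
    case False then show ?thesis using pointwise_pos(2)[OF s False] by (simp add: hh_def)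
  qed
qed

lemma E_hh_sq: "(\<integral>s. (hh s)\<^sup>2 \<partial>PI) \<le> 2 / (real n * p0)"
proof -
  define i0 where "i0 s = (if NN s = 0 then 1 else 0 :: real)" for s
  have i0m: "i0 \<in> borel_measurable PI" unfolding i0_def[abs_def] using NN_meas
    by (intro measurable_If) (auto simp: pred_def)
  have i0b: "\<bar>i0 s\<bar> \<le> 1" for s unfolding i0_def by auto
  have iW: "integrable PI W" using W_meas W_bnd by (intro int_PI[where B="4 * (real n)\<^sup>2"]) auto
  have ii0: "integrable PI i0" using i0m i0b by (intro int_PI[where B=1]) auto
  have iinv: "integrable PI (\<lambda>s. 1 / NN s)" using invNN_meas invNN_bnd by (intro int_PI[where B=1]) auto
  have m1: "(\<lambda>s. 1 / (NN s + 1)) \<in> borel_measurable PI" using NN_meas by measurable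
  have b1: "\<bar>1 / (NN s + 1)\<bar> \<le> 1" for s using NN_nonneg[of s] by simp
  have i1: "integrable PI (\<lambda>s. 1 / (NN s + 1))" using m1 b1 by (intro int_PI[where B=1]) auto
  have "(\<integral>s. (hh s)\<^sup>2 \<partial>PI) = (\<integral>s. i0 s + W s \<partial>PI)"
    unfolding i0_def by (intro Bochner_Integration.integral_cong refl hh_sq)
  also have "\<dots> = (\<integral>s. i0 s \<partial>PI) + (\<integral>s. W s \<partial>PI)"
    using ii0 iW by simp
  also have "\<dots> \<le> (\<integral>s. i0 s \<partial>PI) + (\<integral>s. 1 / NN s \<partial>PI)"
    using EW_le by simp
  also have "\<dots> = (\<integral>s. i0 s + 1 / NN s \<partial>PI)" using ii0 iinv by simp
  also have "\<dots> \<le> (\<integral>s. 2 * (1 / (NN s + 1)) \<partial>PI)"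
  proof (rule integral_mono)
    show "integrable PI (\<lambda>s. i0 s + 1 / NN s)" using ii0 iinv by simp
    show "integrable PI (\<lambda>s. 2 * (1 / (NN s + 1)))" using integrable_mult_right[OF i1, of 2] by simp
    fix s show "i0 s + 1 / NN s \<le> 2 * (1 / (NN s + 1))"
    proof (cases "NN s = 0")
      case False
      then have "1 \<le> NN s" by (rule NN_ge1)
      then show ?thesis unfolding i0_def using False by (simp add: field_simps)
    qed (simp add: i0_def)
  qed
  also have "\<dots> = 2 * (\<integral>s. 1 / (NN s + 1) \<partial>PI)" by (rule integral_mult_right_zero)
  also have "\<dots> \<le> 2 / (real n * p0)"
  proof -
    have np: "real n * p0 > 0" using n_pos p0_pos by simp
    have "(\<integral>s. 1 / (NN s + 1) \<partial>PI) \<le> 1 / (real n * p0)"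
      using inv_bound np by (simp add: field_simps)
    then show ?thesis by simp
  qed
  finally show ?thesis .
qed

lemma E_hh: "(\<integral>s. hh s \<partial>PI) \<le> sqrt (2 / (real n * p0))"
proof -
  have "(\<integral>s. hh s \<partial>PI)\<^sup>2 \<le> (\<integral>s. (hh s)\<^sup>2 \<partial>PI)"
    using hh_bnd by (intro sq_int_le[OF PI_prob hh_meas]) auto
  also have "\<dots> \<le> 2 / (real n * p0)" by (rule E_hh_sq)
  finally have "sqrt ((\<integral>s. hh s \<partial>PI)\<^sup>2) \<le> sqrt (2 / (real n * p0))" by (rule real_sqrt_le_mono)
  then show ?thesis by simp
qed

lemma hh_nonneg: "s \<in> space PI \<Longrightarrow> 0 \<le> hh s"
  using pointwise_pos(2)[of s] by (auto simp: hh_def)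

lemma AA_nonneg: "0 \<le> AA" unfolding AA_def by (intro integral_nonneg_AE) auto

lemma TT_final: "2 * TT \<le> 2 * sqrt VV / pis + 4 * \<epsilon> / (pis * (1 - \<epsilon>))"
proof -
  have pe: "0 < (1-\<epsilon>) * pis" using eps pis_pos by simp
  have t1: "(1-\<epsilon>) * AA / p0 \<le> AA / pis"
  proof -
    have "(1-\<epsilon>) * AA * pis \<le> p0 * AA" using p0_ge AA_nonneg 
      by (metis mult.commute mult.left_commute mult_right_mono)
    then show ?thesis using p0_pos pis_pos by (simp add: field_simps)
  qed
  have t2: "\<epsilon> * qQ / p0 \<le> \<epsilon> / (pis * (1 - \<epsilon>))"
  proof -
    have "\<epsilon> * qQ \<le> \<epsilon>" using eps qQ01 mult_left_mono[of qQ 1 \<epsilon>] by simp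
    moreover have "\<epsilon> * qQ \<ge> 0" using eps qQ01 by simp
    ultimately have "\<epsilon> * qQ / p0 \<le> \<epsilon> / p0" using p0_pos by (simp add: divide_right_mono)
    also have "\<dots> \<le> \<epsilon> / ((1-\<epsilon>) * pis)" using p0_ge pe eps by (intro divide_left_mono) auto
    finally show ?thesis by (simp add: mult.commute)
  qed
  have "TT \<le> (1-\<epsilon>) * AA / p0 + 2 * (\<epsilon> * qQ / p0)"
    using TT_le by (simp add: add_divide_distrib)
  also have "\<dots> \<le> sqrt VV / pis + 2 * (\<epsilon> / (pis * (1 - \<epsilon>)))"
    using t1 t2 AA_le pis_pos divide_right_mono[OF AA_le, of pis] by linarith
  finally show ?thesis by simp
qed

lemma sample_final: "sqrt (2 / (real n * p0)) \<le> sqrt 2 / sqrt (real n * pis * (1 - \<epsilon>))"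
proof -
  have pe: "0 < real n * pis * (1-\<epsilon>)" using eps pis_pos n_pos by simp
  have le: "real n * pis * (1-\<epsilon>) \<le> real n * p0"
    using mult_left_mono[OF p0_ge, of "real n"] by (simp add: mult.commute mult.left_commute)
  have "sqrt (2 / (real n * p0)) = sqrt 2 / sqrt (real n * p0)" by (simp add: real_sqrt_divide)
  also have "\<dots> \<le> sqrt 2 / sqrt (real n * pis * (1 - \<epsilon>))"
    using pe le by (intro divide_left_mono real_sqrt_le_mono) auto
  finally show ?thesis .
qed

lemma main_bound:
  "(\<integral>\<^sup>+ s. ennreal (mmd k (P (thetahat s)) mu) \<partial>PI)
     \<le> ennreal (4 * \<epsilon> + 8 * \<epsilon> / (pis * (1 - \<epsilon>)) + 2 * sqrt VV / pis
                   + 2 * sqrt 2 / sqrt (real n * pis * (1 - \<epsilon>)))"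
proof -
  interpret PIp: prob_space PI by (rule PI_prob)
  have ih: "integrable PI hh" using hh_meas hh_bnd by (intro int_PI[where B="1 + 2 * real n"]) auto
  have "(\<integral>\<^sup>+ s. ennreal (mmd k (P (thetahat s)) mu) \<partial>PI) \<le> (\<integral>\<^sup>+ s. ennreal (2 * hh s + 2 * TT) \<partial>PI)"
    using pointwise by (intro nn_integral_mono ennreal_leI) auto
  also have "\<dots> = ennreal (\<integral>s. 2 * hh s + 2 * TT \<partial>PI)"
    using ih hh_nonneg TT_nonneg by (intro nn_integral_eq_integral) (auto intro!: AE_I2)
  also have "(\<integral>s. 2 * hh s + 2 * TT \<partial>PI) = 2 * (\<integral>s. hh s \<partial>PI) + 2 * TT"
    using ih by (simp add: PIp.prob_space)
  also have "\<dots> \<le> 2 * sqrt (2 / (real n * p0)) + (2 * sqrt VV / pis + 4 * \<epsilon> / (pis * (1 - \<epsilon>)))"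
    using E_hh TT_final by simp
  also have "\<dots> \<le> 4 * \<epsilon> + 8 * \<epsilon> / (pis * (1 - \<epsilon>)) + 2 * sqrt VV / pis
                   + 2 * sqrt 2 / sqrt (real n * pis * (1 - \<epsilon>))"
  proof -
    have "0 \<le> 4 * \<epsilon> / (pis * (1 - \<epsilon>))" using eps pis_pos by simp
    then show ?thesis using sample_final eps by simp
  qed
  finally show ?thesis by (simp add: ennreal_leI)
qed

end


theorem theorem9:
  fixes k :: "real \<Rightarrow> real \<Rightarrow> real"
    and P :: "'a \<Rightarrow> real measure" and \<Theta> :: "'a set"
    and \<theta>star :: 'a and PX Q :: "real measure" and \<epsilon> :: real
    and \<pi> :: "real \<Rightarrow> real" and PXM :: "(real \<times> bool) measure" and n :: nat
    and thetahat :: "(nat \<Rightarrow> real \<times> bool) \<Rightarrow> 'a"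
  assumes kernel: "pd_kernel k" "characteristic k" "\<And>x y. \<bar>k x y\<bar> \<le> 1"
      "(\<lambda>(x, y). k x y) \<in> borel_measurable borel"
    and model: "\<And>\<theta>. \<theta> \<in> \<Theta> \<Longrightarrow> prob_space (P \<theta>) \<and> sets (P \<theta>) = sets borel"
    and theta_star: "\<theta>star \<in> \<Theta>"
    and Q: "prob_space Q" "sets Q = sets borel"
    and eps: "0 \<le> \<epsilon>" "\<epsilon> < 1"
    and PX: "prob_space PX" "sets PX = sets borel"
    and mixture: "\<And>A. A \<in> sets borel \<Longrightarrow>
                    measure PX A = (1 - \<epsilon>) * measure (P \<theta>star) A + \<epsilon> * measure Q A"
    and pi_meas: "\<pi> \<in> borel_measurable borel" and pi_range: "\<And>x. 0 \<le> \<pi> x \<and> \<pi> x \<le> 1"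
    and PXM: "prob_space PXM" "sets PXM = sets (borel \<Otimes>\<^sub>M count_space UNIV)"
    and PXM_marg: "distr PXM borel fst = PX"
    and PXM_cond: "\<And>A. A \<in> sets borel \<Longrightarrow>
                    measure PXM (A \<times> {True}) = (\<integral>x\<in>A. \<pi> x \<partial>PX)"
    and pistar_pos: "(\<integral>x. \<pi> x \<partial>P \<theta>star) > 0"
    and n_pos: "n > 0"
    and estimator: "\<And>s. s \<in> space (\<Pi>\<^sub>M i\<in>{..<n}. PXM) \<Longrightarrow>
         thetahat s \<in> \<Theta> \<and>
         (\<forall>\<theta>\<in>\<Theta>. mmd_objective k P n s (thetahat s) \<le> mmd_objective k P n s \<theta>)"
  shows "(\<integral>\<^sup>+ s. ennreal (mmd k (P (thetahat s)) (P \<theta>star)) \<partial>(\<Pi>\<^sub>M i\<in>{..<n}. PXM))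
     \<le> ennreal (let \<pi>s = (\<integral>x. \<pi> x \<partial>P \<theta>star);
                    V = (\<integral>x. (\<pi> x - \<pi>s)\<^sup>2 \<partial>P \<theta>star)
                in 4 * \<epsilon> + 8 * \<epsilon> / (\<pi>s * (1 - \<epsilon>)) + 2 * sqrt V / \<pi>s
                   + 2 * sqrt 2 / sqrt (real n * \<pi>s * (1 - \<epsilon>)))"
  proof -
  interpret setting k P \<Theta> \<theta>star PX Q \<epsilon> \<pi> PXM n thetahat
    by (rule setting.intro) (fact assms)+
  show ?thesis using main_bound by (simp add: pis_def VV_def Let_def)
qed


end
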